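(* Let $n,J\ge 1$ and let $X=[x_1^{*},\dots,x_J^{*}]^{*}\in\mathbb{C}^{Jn}$ with $x_j\in\mathbb{C}^n$. Then $$\|X\|_{\mathcal{CA}}=\inf\Big\{\tfrac{1}{2n}\Big(\operatorname{tr}\operatorname{Toep}(u_c)+\sum_{j=1}^{J}\operatorname{tr}\operatorname{Toep}(u_j)\Big)+\tfrac12 t\Big\},$$ where the infimum is over all $u_c,u_1,\dots,u_J\in\mathbb{C}^n$, $t\in\mathbb{R}$, and $z_c,z_1,\dots,z_J\in\mathbb{C}^n$ with $z_c+z_j=x_j$ for all $j\in\{1,\dots,J\}$, subject to the linear matrix inequality $$\begin{bmatrix}\operatorname{diag}\big(\operatorname{Toep}(u_c),\operatorname{Toep}(u_1),\dots,\operatorname{Toep}(u_J)\big) & Z\\ Z^{*} & t\end{bmatrix}\succeq 0,\qquad Z=[z_c^{*},z_1^{*},\dots,z_J^{*}]^{*}\in\mathbb{C}^{(J+1)n}.$$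
   Context: For $f\in[0,1]$ and $\phi\in[0,2\pi)$, the atom $a(f,\phi)\in\mathbb{C}^n$ has entries $[a(f,\phi)]_t=e^{i(2\pi f t+\phi)}$, $t=0,\dots,n-1$, and $a(f)=a(f,0)$. The atomic norm of $x\in\mathbb{C}^n$ is $\|x\|_{\mathcal{A}}=\inf\{\sum_k|c_k| : x=\sum_k |c_k|\,a(f_k,\phi_k),\ f_k\in[0,1],\ \phi_k\in[0,2\pi)\}$ (finite sums). The concatenated atomic norm (CA-norm) of $X=[x_1^*,\dots,x_J^*]^*$ is $\|X\|_{\mathcal{CA}}=\inf\{\|z_c\|_{\mathcal{A}}+\sum_{j=1}^J\|z_j\|_{\mathcal{A}} : z_c,z_j\in\mathbb{C}^n,\ z_c+z_j=x_j\ \forall j\}$. For $u\in\mathbb{C}^n$, $\operatorname{Toep}(u)$ denotes the $n\times n$ Hermitian Toeplitz matrix whose first column is $u$. $\operatorname{diag}(\cdot)$ denotes the block-diagonal matrix, $^{*}$ the conjugate transpose, and $\succeq 0$ positive semidefiniteness. *)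

theory Defs
  imports Complex_Main
begin

(* Vectors in C^n are functions nat => complex, only indices t < n matter.
   n x n matrices are functions nat => nat => complex, only indices < n matter. *)

definition atom :: "real \<Rightarrow> real \<Rightarrow> nat \<Rightarrow> complex" where
  "atom f \<phi> = (\<lambda>t. exp (\<i> * complex_of_real (2 * pi * f * real t + \<phi>)))"

definition atomic_norm :: "nat \<Rightarrow> (nat \<Rightarrow> complex) \<Rightarrow> real" where
  "atomic_norm n x = Inf {(\<Sum>k<m. cmod (c k)) | (m::nat) (c::nat \<Rightarrow> complex) (f::nat \<Rightarrow> real) (\<phi>::nat \<Rightarrow> real).
      (\<forall>k<m. f k \<in> {0..1} \<and> \<phi> k \<in> {0..<2*pi}) \<and>
      (\<forall>t<n. x t = (\<Sum>k<m. complex_of_real (cmod (c k)) * atom (f k) (\<phi> k) t))}"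

(* concatenated atomic norm; x j is the j-th block, j = 1..J *)
definition ca_norm :: "nat \<Rightarrow> nat \<Rightarrow> (nat \<Rightarrow> nat \<Rightarrow> complex) \<Rightarrow> real" where
  "ca_norm n J x = Inf {atomic_norm n zc + (\<Sum>j=1..J. atomic_norm n (z j)) | zc z.
      \<forall>j\<in>{1..J}. \<forall>t<n. zc t + z j t = x j t}"

definition toep :: "(nat \<Rightarrow> complex) \<Rightarrow> nat \<Rightarrow> nat \<Rightarrow> complex" where
  "toep u i k = (if k \<le> i then u (i - k) else cnj (u (k - i)))"

definition mtrace :: "nat \<Rightarrow> (nat \<Rightarrow> nat \<Rightarrow> complex) \<Rightarrow> complex" where
  "mtrace n M = (\<Sum>i<n. M i i)"

definition psd :: "nat \<Rightarrow> (nat \<Rightarrow> nat \<Rightarrow> complex) \<Rightarrow> bool" where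
  "psd N M = (\<forall>v :: nat \<Rightarrow> complex.
      (\<Sum>i<N. \<Sum>k<N. cnj (v i) * M i k * v k) \<in> \<real> \<and>
      0 \<le> Re (\<Sum>i<N. \<Sum>k<N. cnj (v i) * M i k * v k))"

(* The ((J+1)n+1) x ((J+1)n+1) matrix
   [ diag(Toep(u 0), ..., Toep(u J))   Z ]
   [ Z^*                               t ]
   with Z = [z 0; z 1; ...; z J]; block b occupies indices b*n .. b*n+n-1. *)
definition lmi_matrix :: "nat \<Rightarrow> nat \<Rightarrow> (nat \<Rightarrow> nat \<Rightarrow> complex) \<Rightarrow> real
    \<Rightarrow> (nat \<Rightarrow> nat \<Rightarrow> complex) \<Rightarrow> nat \<Rightarrow> nat \<Rightarrow> complex" where
  "lmi_matrix n J u t z i k =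
     (let N = (J + 1) * n in
      if i < N \<and> k < N then
        (if i div n = k div n then toep (u (i div n)) (i mod n) (k mod n) else 0)
      else if i < N \<and> k = N then z (i div n) (i mod n)
      else if i = N \<and> k < N then cnj (z (k div n) (k mod n))
      else if i = N \<and> k = N then complex_of_real t
      else 0)"

end

theory Submission
  imports Defs "Jordan_Normal_Form.Determinant"
begin


definition QF :: "nat \<Rightarrow> (nat \<Rightarrow> nat \<Rightarrow> complex) \<Rightarrow> (nat \<Rightarrow> complex) \<Rightarrow> complex" where
  "QF m M v = (\<Sum>i<m. \<Sum>k<m. cnj (v i) * M i k * v k)"

lemma QF_split0:
  "QF (Suc m) M v = cnj (v 0) * M 0 0 * v 0 + (\<Sum>k<m. cnj (v 0) * M 0 (Suc k) * v (Suc k))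
     + (\<Sum>i<m. cnj (v (Suc i)) * M (Suc i) 0 * v 0) + QF m (\<lambda>i k. M (Suc i) (Suc k)) (\<lambda>i. v (Suc i))"
  unfolding QF_def by (simp only: sum.lessThan_Suc_shift) (simp add: sum.distrib algebra_simps)

lemma QF_splitl:
  "QF (Suc m) M v = QF m M v + (\<Sum>k<m. cnj (v m) * M m k * v k)
     + (\<Sum>i<m. cnj (v i) * M i m * v m) + cnj (v m) * M m m * v m"
  unfolding QF_def by (simp add: sum.distrib algebra_simps)

lemma completion:
  fixes M :: "nat \<Rightarrow> nat \<Rightarrow> complex"
  assumes herm: "\<And>i k. i < Suc (Suc m) \<Longrightarrow> k < Suc (Suc m) \<Longrightarrow> M k i = cnj (M i k)"
    and lead: "\<And>v. 0 \<le> Re (QF (Suc m) M v)"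
    and trail: "\<And>v. 0 \<le> Re (QF (Suc m) (\<lambda>i k. M (Suc i) (Suc k)) v)"
    and mid: "\<And>v. (\<forall>i<m. (\<Sum>k<m. M (Suc i) (Suc k) * v k) = 0) \<Longrightarrow> \<forall>i<m. v i = 0"
    and solve: "\<And>b. (\<And>v. (\<forall>i<m. (\<Sum>k<m. M (Suc i) (Suc k) * v k) = 0) \<Longrightarrow> \<forall>i<m. v i = 0)
        \<Longrightarrow> \<exists>w. \<forall>i<m. (\<Sum>k<m. M (Suc i) (Suc k) * w k) = b i"
  shows "\<exists>X. \<forall>v. 0 \<le> Re (QF (Suc (Suc m)) (\<lambda>i k. if i = 0 \<and> k = Suc m then X
              else if i = Suc m \<and> k = 0 then cnj X else M i k) v)"
proof -
  define C where "C = (\<lambda>i k. M (Suc i) (Suc k))"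
  obtain g where g: "\<And>i. i < m \<Longrightarrow> (\<Sum>k<m. C i k * g k) = M (Suc i) 0"
    using solve[OF mid, of "\<lambda>i. M (Suc i) 0"] unfolding C_def by blast
  obtain h where h: "\<And>i. i < m \<Longrightarrow> (\<Sum>k<m. C i k * h k) = M (Suc i) (Suc m)"
    using solve[OF mid, of "\<lambda>i. M (Suc i) (Suc m)"] unfolding C_def by blast
  have Ch: "\<And>i k. i < m \<Longrightarrow> k < m \<Longrightarrow> C i k = cnj (C k i)"
    unfolding C_def using herm by (metis Suc_less_eq less_SucI complex_cnj_cnj)
  define X where "X = (\<Sum>j<m. M 0 (Suc j) * h j)"
  define M' where "M' = (\<lambda>i k. if i = 0 \<and> k = Suc m then X
              else if i = Suc m \<and> k = 0 then cnj X else M i k)"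
  have F3: "(\<Sum>i<m. cnj (g i) * C i k) = M 0 (Suc k)" if k: "k < m" for k
  proof -
    have "(\<Sum>i<m. cnj (g i) * C i k) = (\<Sum>i<m. cnj (C k i * g i))"
      by (rule sum.cong) (auto simp: Ch[OF _ k] mult.commute)
    also have "\<dots> = cnj (M (Suc k) 0)" by (simp only: cnj_sum[symmetric] g[OF k])
    also have "\<dots> = M 0 (Suc k)" using herm[of "Suc k" 0] k by simp
    finally show ?thesis .
  qed
  have F4: "(\<Sum>i<m. cnj (h i) * C i k) = M (Suc m) (Suc k)" if k: "k < m" for k
  proof -
    have "(\<Sum>i<m. cnj (h i) * C i k) = (\<Sum>i<m. cnj (C k i * h i))"
      by (rule sum.cong) (auto simp: Ch[OF _ k] mult.commute)
    also have "\<dots> = cnj (M (Suc k) (Suc m))" by (simp only: cnj_sum[symmetric] h[OF k])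
    also have "\<dots> = M (Suc m) (Suc k)" using herm[of "Suc k" "Suc m"] k by simp
    finally show ?thesis .
  qed
  have swapg: "(\<Sum>i<m. cnj (g i) * (\<Sum>k<m. C i k * y k)) = (\<Sum>k<m. M 0 (Suc k) * y k)" for y
  proof -
    have "(\<Sum>i<m. cnj (g i) * (\<Sum>k<m. C i k * y k)) = (\<Sum>i<m. \<Sum>k<m. cnj (g i) * C i k * y k)"
      by (simp add: sum_distrib_left mult.assoc)
    also have "\<dots> = (\<Sum>k<m. \<Sum>i<m. cnj (g i) * C i k * y k)" by (rule sum.swap)
    also have "\<dots> = (\<Sum>k<m. (\<Sum>i<m. cnj (g i) * C i k) * y k)"
      by (simp add: sum_distrib_right)
    also have "\<dots> = (\<Sum>k<m. M 0 (Suc k) * y k)" by (rule sum.cong) (auto simp: F3)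
    finally show ?thesis .
  qed
  have swaph: "(\<Sum>i<m. cnj (h i) * (\<Sum>k<m. C i k * y k)) = (\<Sum>k<m. M (Suc m) (Suc k) * y k)" for y
  proof -
    have "(\<Sum>i<m. cnj (h i) * (\<Sum>k<m. C i k * y k)) = (\<Sum>i<m. \<Sum>k<m. cnj (h i) * C i k * y k)"
      by (simp add: sum_distrib_left mult.assoc)
    also have "\<dots> = (\<Sum>k<m. \<Sum>i<m. cnj (h i) * C i k * y k)" by (rule sum.swap)
    also have "\<dots> = (\<Sum>k<m. (\<Sum>i<m. cnj (h i) * C i k) * y k)"
      by (simp add: sum_distrib_right)
    also have "\<dots> = (\<Sum>k<m. M (Suc m) (Suc k) * y k)" by (rule sum.cong) (auto simp: F4)
    finally show ?thesis .
  qed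
  have QFC: "QF m C y = (\<Sum>i<m. cnj (y i) * (\<Sum>k<m. C i k * y k))" for y
    unfolding QF_def by (simp add: sum_distrib_left mult.assoc)
  have cX: "cnj X = (\<Sum>k<m. M (Suc m) (Suc k) * g k)"
  proof -
    have "cnj X = (\<Sum>j<m. cnj (h j) * (\<Sum>k<m. C j k * g k))"
      unfolding X_def cnj_sum
    proof (rule sum.cong)
      fix j assume "j \<in> {..<m}"
      hence j: "j < m" by simp
      have "cnj (M 0 (Suc j)) = M (Suc j) 0" using herm[of "Suc j" 0] j by simp
      thus "cnj (M 0 (Suc j) * h j) = cnj (h j) * (\<Sum>k<m. C j k * g k)"
        using g[OF j] by (simp add: mult.commute)
    qed simp
    also have "\<dots> = (\<Sum>k<m. M (Suc m) (Suc k) * g k)" by (rule swaph)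
    finally show ?thesis .
  qed
  have "\<forall>v. 0 \<le> Re (QF (Suc (Suc m)) M' v)"
  proof (intro allI)
    fix v :: "nat \<Rightarrow> complex"
    define a where "a = v 0"
    define e where "e = v (Suc m)"
    define c where "c = (\<lambda>j. v (Suc j))"
    define w where "w = (\<lambda>j. c j + g j * a + h j * e)"
    define \<gamma> where "\<gamma> = (\<Sum>k<m. M 0 (Suc k) * g k)"
    define \<rho> where "\<rho> = (\<Sum>k<m. M (Suc m) (Suc k) * h k)"
    have expand: "QF (Suc (Suc m)) M' v =
        cnj a * M 0 0 * a + (\<Sum>k<m. cnj a * M 0 (Suc k) * c k) + cnj a * X * e
      + (\<Sum>i<m. cnj (c i) * M (Suc i) 0 * a) + QF m C c + (\<Sum>i<m. cnj (c i) * M (Suc i) (Suc m) * e)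
      + cnj e * cnj X * a + (\<Sum>k<m. cnj e * M (Suc m) (Suc k) * c k) + cnj e * M (Suc m) (Suc m) * e"
      apply (subst QF_split0)
      apply (subst QF_splitl)
      apply (simp add: M'_def a_def e_def c_def C_def)
      done
    have Cw: "(\<Sum>k<m. C i k * w k) = (\<Sum>k<m. C i k * c k) + M (Suc i) 0 * a + M (Suc i) (Suc m) * e"
      if i: "i < m" for i
    proof -
      have "(\<Sum>k<m. C i k * w k) = (\<Sum>k<m. C i k * c k) + (\<Sum>k<m. C i k * g k) * a + (\<Sum>k<m. C i k * h k) * e"
        unfolding w_def by (simp add: distrib_left sum.distrib sum_distrib_right mult.assoc)
      thus ?thesis using g[OF i] h[OF i] by simp
    qed
    define s1 where "s1 = (\<Sum>k<m. M 0 (Suc k) * c k)"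
    define s2 where "s2 = (\<Sum>i<m. cnj (c i) * M (Suc i) 0)"
    define s3 where "s3 = (\<Sum>i<m. cnj (c i) * M (Suc i) (Suc m))"
    define s4 where "s4 = (\<Sum>k<m. M (Suc m) (Suc k) * c k)"
    have P1: "(\<Sum>i<m. cnj (c i) * (\<Sum>k<m. C i k * w k)) = QF m C c + s2 * a + s3 * e"
    proof -
      have "(\<Sum>i<m. cnj (c i) * (\<Sum>k<m. C i k * w k)) =
         (\<Sum>i<m. cnj (c i) * (\<Sum>k<m. C i k * c k) + cnj (c i) * M (Suc i) 0 * a + cnj (c i) * M (Suc i) (Suc m) * e)"
        by (rule sum.cong) (simp_all add: Cw distrib_left mult.assoc)
      also have "\<dots> = QF m C c + s2 * a + s3 * e"
        unfolding QFC s2_def s3_def by (simp add: sum.distrib sum_distrib_right)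
      finally show ?thesis .
    qed
    have P2: "(\<Sum>i<m. cnj (g i) * (\<Sum>k<m. C i k * w k)) = s1 + \<gamma> * a + X * e"
      unfolding swapg s1_def \<gamma>_def X_def w_def
      by (simp add: distrib_left sum.distrib sum_distrib_right mult.assoc)
    have P3: "(\<Sum>i<m. cnj (h i) * (\<Sum>k<m. C i k * w k)) = s4 + cnj X * a + \<rho> * e"
      unfolding swaph s4_def \<rho>_def cX w_def
      by (simp add: distrib_left sum.distrib sum_distrib_right mult.assoc)
    have QFw: "QF m C w = QF m C c + s2 * a + s3 * e + cnj a * (s1 + \<gamma> * a + X * e)
          + cnj e * (s4 + cnj X * a + \<rho> * e)"
    proof -
      have "QF m C w = (\<Sum>i<m. cnj (c i) * (\<Sum>k<m. C i k * w k))
          + cnj a * (\<Sum>i<m. cnj (g i) * (\<Sum>k<m. C i k * w k))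
          + cnj e * (\<Sum>i<m. cnj (h i) * (\<Sum>k<m. C i k * w k))"
        unfolding QFC w_def by (simp add: sum.distrib sum_distrib_left algebra_simps)
      thus ?thesis unfolding P1 P2 P3 .
    qed
    have E1: "(\<Sum>k<m. cnj a * M 0 (Suc k) * c k) = cnj a * s1"
      unfolding s1_def by (simp add: sum_distrib_left mult.assoc)
    have E2: "(\<Sum>i<m. cnj (c i) * M (Suc i) 0 * a) = s2 * a"
      unfolding s2_def by (simp add: sum_distrib_right)
    have E3: "(\<Sum>i<m. cnj (c i) * M (Suc i) (Suc m) * e) = s3 * e"
      unfolding s3_def by (simp add: sum_distrib_right)
    have E4: "(\<Sum>k<m. cnj e * M (Suc m) (Suc k) * c k) = cnj e * s4"
      unfolding s4_def by (simp add: sum_distrib_left mult.assoc)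
    have main: "QF (Suc (Suc m)) M' v = QF m C w + cnj a * a * (M 0 0 - \<gamma>)
        + cnj e * e * (M (Suc m) (Suc m) - \<rho>)"
      unfolding expand E1 E2 E3 E4 QFw by (simp add: algebra_simps)
    have QFCg: "QF m C g = (\<Sum>i<m. cnj (g i) * M (Suc i) 0)"
      unfolding QFC by (rule sum.cong) (auto simp: g)
    have QFCh: "QF m C h = (\<Sum>i<m. cnj (h i) * M (Suc i) (Suc m))"
      unfolding QFC by (rule sum.cong) (auto simp: h)
    have S1: "M 0 0 - \<gamma> = QF (Suc m) M (\<lambda>i. if i = 0 then 1 else - g (i - 1))"
    proof -
      have "QF (Suc m) M (\<lambda>i. if i = 0 then 1 else - g (i - 1)) =
         M 0 0 - \<gamma> - (\<Sum>i<m. cnj (g i) * M (Suc i) 0) + QF m C g"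
        unfolding QF_split0 \<gamma>_def by (simp add: QF_def C_def sum_negf)
      thus ?thesis using QFCg by simp
    qed
    have S2: "M (Suc m) (Suc m) - \<rho> = QF (Suc m) (\<lambda>i k. M (Suc i) (Suc k)) (\<lambda>i. if i < m then - h i else 1)"
    proof -
      have q: "QF m (\<lambda>i k. M (Suc i) (Suc k)) (\<lambda>i. if i < m then - h i else 1) = QF m C h"
        unfolding QF_def C_def by (rule sum.cong) (auto intro!: sum.cong)
      have "QF (Suc m) (\<lambda>i k. M (Suc i) (Suc k)) (\<lambda>i. if i < m then - h i else 1) =
         QF m C h - \<rho> - (\<Sum>i<m. cnj (h i) * M (Suc i) (Suc m)) + M (Suc m) (Suc m)"
        unfolding QF_splitl q \<rho>_def by (simp add: sum_negf)
      thus ?thesis using QFCh by simp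
    qed
    have W: "QF m C w = QF (Suc m) M (\<lambda>i. if i = 0 then 0 else w (i - 1))"
      unfolding QF_split0 by (simp add: C_def)
    have "Re (QF (Suc (Suc m)) M' v) = Re (QF m C w) + (cmod a)\<^sup>2 * Re (M 0 0 - \<gamma>)
        + (cmod e)\<^sup>2 * Re (M (Suc m) (Suc m) - \<rho>)"
    proof -
      have ca: "cnj a * a = complex_of_real ((cmod a)\<^sup>2)"
        using complex_norm_square[of a] by (simp add: mult.commute)
      have ce: "cnj e * e = complex_of_real ((cmod e)\<^sup>2)"
        using complex_norm_square[of e] by (simp add: mult.commute)
      show ?thesis unfolding main ca ce by simp
    qed
    also have "\<dots> \<ge> 0" unfolding W S1 S2 using lead trail by simp
    finally show "0 \<le> Re (QF (Suc (Suc m)) M' v)" .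
  qed
  thus ?thesis unfolding M'_def by blast
qed



lemma solve_lin:
  fixes C :: "nat \<Rightarrow> nat \<Rightarrow> complex" and b :: "nat \<Rightarrow> complex"
  assumes inj: "\<And>v. (\<forall>i<m. (\<Sum>k<m. C i k * v k) = 0) \<Longrightarrow> \<forall>i<m. v i = 0"
  shows "\<exists>w. \<forall>i<m. (\<Sum>k<m. C i k * w k) = b i"
proof -
  define A where "A = mat m m (\<lambda>(i,k). C i k)"
  have A: "A \<in> carrier_mat m m" unfolding A_def by simp
  have "det A \<noteq> 0"
  proof
    assume "det A = 0"
    then obtain v where v: "v \<in> carrier_vec m" "v \<noteq> 0\<^sub>v m" "A *\<^sub>v v = 0\<^sub>v m"
      using det_0_iff_vec_prod_zero_field[OF A] by auto
    have "\<forall>i<m. (\<Sum>k<m. C i k * (v $ k)) = 0"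
    proof (intro allI impI)
      fix i assume i: "i < m"
      have "(A *\<^sub>v v) $ i = 0" using v(3) i by simp
      thus "(\<Sum>k<m. C i k * (v $ k)) = 0" using i v(1)
        by (simp add: A_def mult_mat_vec_def scalar_prod_def atLeast0LessThan)
    qed
    from inj[OF this] have "v = 0\<^sub>v m" using v(1) by (auto intro!: eq_vecI)
    with v(2) show False by simp
  qed
  from det_non_zero_imp_unit[OF A this, of "()"]
  obtain B where B: "B \<in> carrier_mat m m" "A * B = 1\<^sub>m m"
    by (auto simp: Units_def ring_mat_def)
  define bv where "bv = vec m b"
  define w where "w = B *\<^sub>v bv"
  have "A *\<^sub>v w = bv"
  proof -
    have bv: "bv \<in> carrier_vec m" by (simp add: bv_def)
    have "A *\<^sub>v (B *\<^sub>v bv) = (A * B) *\<^sub>v bv"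
      using assoc_mult_mat_vec[OF A B(1) bv] by simp
    thus ?thesis using B(2) bv by (simp add: w_def)
  qed
  show ?thesis
  proof (intro exI allI impI)
    fix i assume i: "i < m"
    have "(A *\<^sub>v w) $ i = b i" using \<open>A *\<^sub>v w = bv\<close> i by (simp add: bv_def)
    moreover have "dim_vec w = m" using B by (simp add: w_def)
    ultimately show "(\<Sum>k<m. C i k * (w $ k)) = b i" using i
      by (simp add: A_def mult_mat_vec_def scalar_prod_def atLeast0LessThan)
  qed
qed


definition PSDn :: "nat \<Rightarrow> (nat \<Rightarrow> nat \<Rightarrow> complex) \<Rightarrow> bool" where
  "PSDn n M = (\<forall>v. 0 \<le> Re (QF n M v))"

lemma QF_cong: "(\<And>i k. i < m \<Longrightarrow> k < m \<Longrightarrow> M i k = M' i k) \<Longrightarrow> (\<And>i. i < m \<Longrightarrow> v i = v' i)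
   \<Longrightarrow> QF m M v = QF m M' v'"
  unfolding QF_def by (auto intro!: sum.cong)

lemma toep_Suc[simp]: "toep u (Suc i) (Suc k) = toep u i k"
  unfolding toep_def by auto

lemma toep_herm: "Im (u 0) = 0 \<Longrightarrow> toep u k i = cnj (toep u i k)"
  unfolding toep_def by (cases "i = k") (auto simp: complex_eq_iff)

lemma QF_add_diag:
  assumes "\<And>i k. i < n \<Longrightarrow> k < n \<Longrightarrow> M' i k = M i k + (if i = k then d else 0)"
  shows "QF n M' v = QF n M v + d * (\<Sum>i<n. cnj (v i) * v i)"
proof -
  have inner: "(\<Sum>k<n. cnj (v i) * M' i k * v k) = (\<Sum>k<n. cnj (v i) * M i k * v k) + d * (cnj (v i) * v i)"
    if i: "i < n" for i
  proof -
    have "(\<Sum>k<n. cnj (v i) * M' i k * v k) = (\<Sum>k<n. cnj (v i) * M i k * v k + (if i = k then d * (cnj (v i) * v i) else 0))"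
      by (rule sum.cong) (auto simp: assms i algebra_simps)
    also have "\<dots> = (\<Sum>k<n. cnj (v i) * M i k * v k) + (\<Sum>k<n. (if i = k then d * (cnj (v i) * v i) else 0))"
      by (rule sum.distrib)
    also have "(\<Sum>k<n. (if i = k then d * (cnj (v i) * v i) else 0)) = d * (cnj (v i) * v i)"
      using i by (simp add: sum.delta)
    finally show ?thesis .
  qed
  have "QF n M' v = (\<Sum>i<n. (\<Sum>k<n. cnj (v i) * M i k * v k) + d * (cnj (v i) * v i))"
    unfolding QF_def by (rule sum.cong) (auto simp: inner)
  also have "\<dots> = QF n M v + d * (\<Sum>i<n. cnj (v i) * v i)"
    unfolding QF_def by (simp add: sum.distrib sum_distrib_left)
  finally show ?thesis .
qed

lemma sum_cnj_sq: "(\<Sum>i<(n::nat). cnj (v i) * v i) = complex_of_real (\<Sum>i<n. (cmod (v i))\<^sup>2)"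
proof -
  have "complex_of_real (\<Sum>i<n. (cmod (v i))\<^sup>2) = (\<Sum>i<n. complex_of_real ((cmod (v i))\<^sup>2))"
    by (rule of_real_sum)
  also have "\<dots> = (\<Sum>i<n. cnj (v i) * v i)"
    by (rule sum.cong) (simp_all only: complex_norm_square mult.commute)
  finally show ?thesis by simp
qed

lemma sum_sq_pos: "(\<exists>i<(n::nat). v i \<noteq> 0) \<Longrightarrow> 0 < (\<Sum>i<n. (cmod (v i))\<^sup>2)"
proof -
  assume "\<exists>i<n. v i \<noteq> 0"
  then obtain j where j: "j < n" "v j \<noteq> 0" by auto
  have "0 < (cmod (v j))\<^sup>2" using j by simp
  also have "\<dots> \<le> (\<Sum>i<n. (cmod (v i))\<^sup>2)"
    using j by (intro member_le_sum) auto
  finally show ?thesis .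
qed

lemma toep_bump: "toep (u(0 := u 0 + d)) i k = toep u i k + (if i = k then d else 0)"
  unfolding toep_def by auto

lemma QF_toep_bump:
  "QF n (toep (u(0 := u 0 + complex_of_real d))) v = QF n (toep u) v + of_real (d * (\<Sum>i<n. (cmod (v i))\<^sup>2))"
  by (subst QF_add_diag[OF toep_bump]) (simp add: sum_cnj_sq)

lemma ext1:
  assumes n: "n \<ge> 1" and re: "Im (u 0) = 0"
    and pd: "\<And>v. (\<exists>i<n. v i \<noteq> 0) \<Longrightarrow> 0 < Re (QF n (toep u) v)"
    and psd: "PSDn n (toep u)"
  shows "\<exists>x. PSDn (Suc n) (toep (u(n := x)))"
proof -
  obtain m where m: "n = Suc m" using n by (cases n) auto
  have herm: "toep u k i = cnj (toep u i k)" for i k using toep_herm[of u, OF re] .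
  have lead: "0 \<le> Re (QF (Suc m) (toep u) v)" for v using psd m by (simp add: PSDn_def)
  have trail: "0 \<le> Re (QF (Suc m) (\<lambda>i k. toep u (Suc i) (Suc k)) v)" for v
    using psd m by (simp add: PSDn_def)
  have mid: "\<forall>i<m. v i = 0" if h: "\<forall>i<m. (\<Sum>k<m. toep u (Suc i) (Suc k) * v k) = 0" for v
  proof (rule ccontr)
    assume "\<not> (\<forall>i<m. v i = 0)"
    then have ex: "\<exists>i<n. (\<lambda>i. if i < m then v i else 0) i \<noteq> 0" using m by auto
    have "QF m (toep u) v = (\<Sum>i<m. cnj (v i) * (\<Sum>k<m. toep u i k * v k))"
      unfolding QF_def by (simp add: sum_distrib_left mult.assoc)
    also have "\<dots> = 0" using h by simp
    finally have "QF m (toep u) v = 0" .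
    moreover have "QF n (toep u) (\<lambda>i. if i < m then v i else 0) = QF m (toep u) v"
      unfolding m QF_splitl by (auto intro: QF_cong)
    ultimately show False using pd[OF ex] by simp
  qed
  have "\<exists>X. \<forall>v. 0 \<le> Re (QF (Suc (Suc m)) (\<lambda>i k. if i = 0 \<and> k = Suc m then X
              else if i = Suc m \<and> k = 0 then cnj X else toep u i k) v)"
    by (rule completion[OF herm lead trail mid solve_lin])
  then obtain X where X: "\<And>v. 0 \<le> Re (QF (Suc (Suc m)) (\<lambda>i k. if i = 0 \<and> k = Suc m then X
              else if i = Suc m \<and> k = 0 then cnj X else toep u i k) v)" by blast
  have "PSDn (Suc n) (toep (u(n := cnj X)))"
    unfolding PSDn_def
  proof
    fix v
    have "QF (Suc n) (toep (u(n := cnj X))) v = QF (Suc (Suc m)) (\<lambda>i k. if i = 0 \<and> k = Suc m then X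
              else if i = Suc m \<and> k = 0 then cnj X else toep u i k) v"
      unfolding m by (rule QF_cong) (auto simp: toep_def)
    thus "0 \<le> Re (QF (Suc n) (toep (u(n := cnj X))) v)" using X by simp
  qed
  thus ?thesis by blast
qed

lemma extM:
  assumes n: "n \<ge> 1" and re: "Im (u 0) = 0" and psd: "PSDn n (toep u)"
    and M: "n \<le> M"
  shows "\<delta> > 0 \<Longrightarrow> \<exists>u'. PSDn M (toep u') \<and> (\<forall>d. 0 < d \<and> d < n \<longrightarrow> u' d = u d)
            \<and> u' 0 = u 0 + complex_of_real \<delta>"
  using M
proof (induction M arbitrary: \<delta> rule: dec_induct)
  case base
  define u' where "u' = u(0 := u 0 + complex_of_real \<delta>)"
  have "PSDn n (toep u')"
    unfolding PSDn_def u'_def QF_toep_bump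
  proof
    fix v
    have "0 \<le> Re (QF n (toep u) v)" using psd by (simp add: PSDn_def)
    moreover have "0 \<le> \<delta> * (\<Sum>i<n. (cmod (v i))\<^sup>2)" using base by (simp add: sum_nonneg)
    ultimately show "0 \<le> Re (QF n (toep u) v + complex_of_real (\<delta> * (\<Sum>i<n. (cmod (v i))\<^sup>2)))" by simp
  qed
  thus ?case by (auto simp: u'_def)
next
  case (step k)
  have "\<delta>/2 > 0" using step by simp
  from step.IH[OF this] obtain u1 where u1: "PSDn k (toep u1)" "\<forall>d. 0 < d \<and> d < n \<longrightarrow> u1 d = u d"
     "u1 0 = u 0 + complex_of_real (\<delta>/2)" by blast
  define u2 where "u2 = u1(0 := u1 0 + complex_of_real (\<delta>/2))"
  have k: "k \<ge> 1" using step n by simp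
  have re2: "Im (u2 0) = 0" using re u1(3) by (simp add: u2_def)
  have pd2: "0 < Re (QF k (toep u2) v)" if ex: "\<exists>i<k. v i \<noteq> 0" for v
  proof -
    have "0 \<le> Re (QF k (toep u1) v)" using u1(1) by (simp add: PSDn_def)
    moreover have "0 < \<delta>/2 * (\<Sum>i<k. (cmod (v i))\<^sup>2)" using sum_sq_pos[OF ex] step by simp
    ultimately show ?thesis unfolding u2_def QF_toep_bump by simp
  qed
  have psd2: "PSDn k (toep u2)"
    unfolding PSDn_def
  proof
    fix v
    show "0 \<le> Re (QF k (toep u2) v)"
    proof (cases "\<exists>i<k. v i \<noteq> 0")
      case True thus ?thesis using pd2 by force
    next
      case False
      hence "QF k (toep u2) v = 0" unfolding QF_def by simp
      thus ?thesis by simp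
    qed
  qed
  obtain x where x: "PSDn (Suc k) (toep (u2(k := x)))" using ext1[OF k re2 pd2 psd2] by blast
  show ?case
  proof (intro exI conjI allI impI)
    show "PSDn (Suc k) (toep (u2(k := x)))" by (rule x)
    fix d assume "0 < d \<and> d < n"
    thus "(u2(k := x)) d = u d" using u1(2) step(1) by (auto simp: u2_def)
  next
    show "(u2(k := x)) 0 = u 0 + complex_of_real \<delta>"
      using k u1(3) by (simp add: u2_def flip: of_real_add)
  qed
qed



definition ex :: "real \<Rightarrow> complex" where "ex x = cis (2 * pi * x)"

lemma ex_add: "ex (a + b) = ex a * ex b"
  unfolding ex_def by (simp add: cis_mult distrib_left)

lemma ex_cnj: "cnj (ex a) = ex (- a)"
  unfolding ex_def by (simp add: cis_cnj)

lemma ex_zero[simp]: "ex 0 = 1" unfolding ex_def by simp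

lemma norm_ex[simp]: "cmod (ex a) = 1" unfolding ex_def by simp

lemma ex_cnj_mult: "cnj (ex a) * ex a = 1"
  unfolding ex_cnj ex_add[symmetric] by simp

lemma ex_power: "ex a ^ k = ex (real k * a)"
  unfolding ex_def DeMoivre by (simp add: algebra_simps)

lemma ex_int: "ex (of_int m) = 1"
  unfolding ex_def using cis_multiple_2pi[of "of_int m"] by simp

lemma ex_eq_1: assumes "ex a = 1" shows "\<exists>j::int. a = of_int j"
proof -
  have "Re (ex a) = cos (2 * pi * a)" by (simp add: ex_def)
  hence "cos (2 * pi * a) = 1" using assms by simp
  then obtain j :: int where "2 * pi * a = real_of_int j * 2 * pi" using cos_one_2pi_int[of "2*pi*a"] by blast
  hence "a = j" by simp
  thus ?thesis by blast
qed

lemma geo_sum: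
  fixes N :: nat and m :: int
  assumes N: "N > 0" and m: "\<bar>m\<bar> < int N"
  shows "(\<Sum>k<N. ex (real k * of_int m / real N)) = (if m = 0 then of_nat N else 0)"
proof (cases "m = 0")
  case True thus ?thesis by simp
next
  case False
  define z where "z = ex (of_int m / real N)"
  have pw: "ex (real k * of_int m / real N) = z ^ k" for k
    unfolding z_def ex_power by simp
  have zN: "z ^ N = 1" unfolding z_def ex_power using N by (simp add: ex_int)
  have z1: "z \<noteq> 1"
  proof
    assume "z = 1"
    then obtain j :: int where j: "of_int m / real N = of_int j" using ex_eq_1 unfolding z_def by blast
    hence mj: "m = j * int N" using N by (simp add: field_simps) (metis of_int_eq_iff of_int_mult of_int_of_nat_eq)
    show False
    proof (cases "j = 0")
      case True thus False using mj False by simp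
    next
      case j0: False
      have "\<bar>m\<bar> = \<bar>j\<bar> * int N" using mj by (simp add: abs_mult)
      also have "\<dots> \<ge> 1 * int N"
      proof (rule mult_right_mono)
        show "1 \<le> \<bar>j\<bar>" using j0 by (cases "j > 0") auto
      qed simp
      finally show False using m by simp
    qed
  qed
  have "(\<Sum>k<N. ex (real k * of_int m / real N)) = (\<Sum>k<N. z ^ k)" by (simp add: pw)
  also have "\<dots> = 0" using geometric_sum[OF z1, of N] zN by simp
  finally show ?thesis using False by simp
qed

lemma swap3: "(\<Sum>k\<in>K. \<Sum>i\<in>I. \<Sum>j\<in>J. f k i j) = (\<Sum>i\<in>I. \<Sum>j\<in>J. \<Sum>k\<in>K. (f k i j :: complex))"
proof -
  have "(\<Sum>k\<in>K. \<Sum>i\<in>I. \<Sum>j\<in>J. f k i j) = (\<Sum>i\<in>I. \<Sum>k\<in>K. \<Sum>j\<in>J. f k i j)"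
    by (rule sum.swap)
  also have "\<dots> = (\<Sum>i\<in>I. \<Sum>j\<in>J. \<Sum>k\<in>K. f k i j)"
    by (rule sum.cong[OF refl]) (rule sum.swap)
  finally show ?thesis .
qed

lemma count_pairs:
  fixes D :: int
  assumes D: "\<bar>D\<bar> \<le> int M"
  shows "(\<Sum>s<M. \<Sum>s'<M. if int s - int s' = D then (1::complex) else 0) = of_int (int M - \<bar>D\<bar>)"
proof -
  have inner: "(\<Sum>s'<M. if int s - int s' = D then (1::complex) else 0)
       = (if 0 \<le> int s - D \<and> int s - D < int M then 1 else 0)" for s
  proof -
    have "(\<Sum>s'<M. if int s - int s' = D then (1::complex) else 0)
        = (\<Sum>s'<M. if 0 \<le> int s - D then (if s' = nat (int s - D) then 1 else 0) else 0)"
      by (rule sum.cong) auto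
    also have "\<dots> = (if 0 \<le> int s - D \<and> int s - D < int M then 1 else 0)"
      by (auto simp: sum.delta)
    finally show ?thesis .
  qed
  have "(\<Sum>s<M. \<Sum>s'<M. if int s - int s' = D then (1::complex) else 0)
      = (\<Sum>s<M. if 0 \<le> int s - D \<and> int s - D < int M then 1 else 0)"
    by (simp add: inner)
  also have "\<dots> = (\<Sum>s\<in>{s\<in>{..<M}. 0 \<le> int s - D \<and> int s - D < int M}. 1)"
    by (rule sum.inter_filter[OF finite_lessThan, symmetric])
  also have "\<dots> = of_nat (card {s\<in>{..<M}. 0 \<le> int s - D \<and> int s - D < int M})" by (rule sum_constant[THEN trans]) simp
  also have "\<dots> = of_int (int M - \<bar>D\<bar>)"
  proof (cases "D \<ge> 0")
    case True
    have "{s\<in>{..<M}. 0 \<le> int s - D \<and> int s - D < int M} = {nat D..<M}" using True by auto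
    thus ?thesis using True D by simp
  next
    case False
    have "{s\<in>{..<M}. 0 \<le> int s - D \<and> int s - D < int M} = {..<nat (int M + D)}" using False by auto
    thus ?thesis using False D by simp
  qed
  finally show ?thesis .
qed

lemma toep_shift: assumes h: "int s - int s' = int r - int r'" shows "toep u s s' = toep u r r'"
proof -
  have a: "s' \<le> s \<longleftrightarrow> r' \<le> r" using h by linarith
  have b: "s - s' = r - r'" using h by linarith
  have c: "s' - s = r' - r" using h by linarith
  show ?thesis unfolding toep_def a b c ..
qed

definition phi :: "nat \<Rightarrow> nat \<Rightarrow> (nat \<Rightarrow> nat \<Rightarrow> complex) \<Rightarrow> nat \<Rightarrow> complex" where
  "phi M N T k = QF M T (\<lambda>s. ex (real k * real s / real N))"

definition beta :: "nat \<Rightarrow> nat \<Rightarrow> (nat \<Rightarrow> complex) \<Rightarrow> nat \<Rightarrow> complex" where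
  "beta n N v k = (\<Sum>r<n. cnj (v r) * ex (real k * real r / real N))"

lemma ex4: "ex a * ex b * ex c * ex d = ex (a + b + c + d)"
  by (simp add: ex_add)

lemma claimB:
  assumes N: "N = 2 * M" and nM: "n \<le> M" and n: "n \<ge> 1"
  shows "(\<Sum>k<N. phi M N (toep u) k * (beta n N v k * cnj (beta n N v k)))
    = of_nat N * (\<Sum>r<n. \<Sum>r'<n. cnj (v r) * v r' * toep u r r' * of_int (int M - \<bar>int r - int r'\<bar>))"
proof -
  define T where "T = toep u"
  define m where "m = (\<lambda>r r' s s'. int s' - int s + int r - int r')"
  define coef where "coef = (\<lambda>r r' s s'. cnj (v r) * v r' * T s s')"
  have Npos: "N > 0" using N nM n by simp
  have step1: "phi M N T k * (beta n N v k * cnj (beta n N v k)) =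
     (\<Sum>r<n. \<Sum>r'<n. \<Sum>s<M. \<Sum>s'<M. coef r r' s s' * ex (real k * of_int (m r r' s s') / real N))" for k
  proof -
    have b: "beta n N v k * cnj (beta n N v k) =
       (\<Sum>r<n. \<Sum>r'<n. cnj (v r) * ex (real k * real r / real N) * (v r' * ex (- (real k * real r' / real N))))"
      unfolding beta_def cnj_sum sum_product by (simp add: ex_cnj)
    have p: "phi M N T k = (\<Sum>s<M. \<Sum>s'<M. ex (- (real k * real s / real N)) * T s s' * ex (real k * real s' / real N))"
      unfolding phi_def QF_def by (simp add: ex_cnj)
    have "phi M N T k * (beta n N v k * cnj (beta n N v k)) =
       (\<Sum>r<n. \<Sum>r'<n. \<Sum>s<M. \<Sum>s'<M. (ex (- (real k * real s / real N)) * T s s' * ex (real k * real s' / real N))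
          * (cnj (v r) * ex (real k * real r / real N) * (v r' * ex (- (real k * real r' / real N)))))"
      unfolding b p by (simp add: sum_distrib_left sum_distrib_right sum.swap[of _ "{..<M}" "{..<n}"])
    also have "\<dots> = (\<Sum>r<n. \<Sum>r'<n. \<Sum>s<M. \<Sum>s'<M. coef r r' s s' * ex (real k * of_int (m r r' s s') / real N))"
    proof (intro sum.cong refl)
      fix r r' s s'
      have "(ex (- (real k * real s / real N)) * T s s' * ex (real k * real s' / real N))
          * (cnj (v r) * ex (real k * real r / real N) * (v r' * ex (- (real k * real r' / real N))))
        = coef r r' s s' * (ex (- (real k * real s / real N)) * ex (real k * real s' / real N)
             * ex (real k * real r / real N) * ex (- (real k * real r' / real N)))"
        unfolding coef_def by (simp add: algebra_simps)
      also have "\<dots> = coef r r' s s' * ex (real k * of_int (m r r' s s') / real N)"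
        unfolding ex4 m_def
        by (rule arg_cong[where f="\<lambda>x. coef r r' s s' * ex x"]) (simp add: add_divide_distrib diff_divide_distrib algebra_simps)
      finally show "(ex (- (real k * real s / real N)) * T s s' * ex (real k * real s' / real N))
          * (cnj (v r) * ex (real k * real r / real N) * (v r' * ex (- (real k * real r' / real N))))
        = coef r r' s s' * ex (real k * of_int (m r r' s s') / real N)" .
    qed
    finally show ?thesis .
  qed
  have "(\<Sum>k<N. phi M N T k * (beta n N v k * cnj (beta n N v k)))
     = (\<Sum>k<N. \<Sum>r<n. \<Sum>r'<n. \<Sum>s<M. \<Sum>s'<M. coef r r' s s' * ex (real k * of_int (m r r' s s') / real N))"
    by (simp add: step1)
  also have "\<dots> = (\<Sum>r<n. \<Sum>r'<n. \<Sum>k<N. \<Sum>s<M. \<Sum>s'<M. coef r r' s s' * ex (real k * of_int (m r r' s s') / real N))"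
    by (rule swap3)
  also have "\<dots> = (\<Sum>r<n. \<Sum>r'<n. \<Sum>s<M. \<Sum>s'<M. \<Sum>k<N. coef r r' s s' * ex (real k * of_int (m r r' s s') / real N))"
    by (intro sum.cong refl swap3)
  also have "\<dots> = (\<Sum>r<n. \<Sum>r'<n. \<Sum>s<M. \<Sum>s'<M. coef r r' s s' * (if m r r' s s' = 0 then of_nat N else 0))"
  proof (intro sum.cong refl)
    fix r r' s s' assume "r \<in> {..<n}" "r' \<in> {..<n}" "s \<in> {..<M}" "s' \<in> {..<M}"
    hence "\<bar>m r r' s s'\<bar> < int N" unfolding m_def N using nM by auto
    thus "(\<Sum>k<N. coef r r' s s' * ex (real k * of_int (m r r' s s') / real N)) =
          coef r r' s s' * (if m r r' s s' = 0 then of_nat N else 0)"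
      by (simp add: sum_distrib_left[symmetric] geo_sum[OF Npos])
  qed
  also have "\<dots> = of_nat N * (\<Sum>r<n. \<Sum>r'<n. cnj (v r) * v r' * toep u r r' * of_int (int M - \<bar>int r - int r'\<bar>))"
    unfolding sum_distrib_left
  proof (intro sum.cong refl)
    fix r r' assume r: "r \<in> {..<n}" "r' \<in> {..<n}"
    have "(\<Sum>s<M. \<Sum>s'<M. coef r r' s s' * (if m r r' s s' = 0 then of_nat N else 0))
      = of_nat N * (cnj (v r) * v r' * toep u r r') * (\<Sum>s<M. \<Sum>s'<M. if int s - int s' = int r - int r' then 1 else 0)"
      unfolding sum_distrib_left
    proof (intro sum.cong refl)
      fix s s'
      show "coef r r' s s' * (if m r r' s s' = 0 then of_nat N else 0) =
        of_nat N * (cnj (v r) * v r' * toep u r r') * (if int s - int s' = int r - int r' then 1 else 0)"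
      proof (cases "int s - int s' = int r - int r'")
        case True
        hence "m r r' s s' = 0" unfolding m_def by simp
        with True show ?thesis unfolding coef_def T_def using toep_shift[OF True, of u] by simp
      next
        case False
        hence "m r r' s s' \<noteq> 0" unfolding m_def by simp
        with False show ?thesis by simp
      qed
    qed
    also have "\<dots> = of_nat N * (cnj (v r) * v r' * toep u r r' * of_int (int M - \<bar>int r - int r'\<bar>))"
      using r nM by (subst count_pairs) auto
    finally show "(\<Sum>s<M. \<Sum>s'<M. coef r r' s s' * (if m r r' s s' = 0 then of_nat N else 0))
      = of_nat N * (cnj (v r) * v r' * toep u r r' * of_int (int M - \<bar>int r - int r'\<bar>))" .
  qed
  finally show ?thesis unfolding T_def .
qed



lemma QF_cnj: assumes "\<And>i k. T k i = cnj (T i k)" shows "cnj (QF m T v) = QF m T v"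
proof -
  have "cnj (QF m T v) = (\<Sum>i<m. \<Sum>k<m. cnj (v k) * T k i * v i)"
    unfolding QF_def cnj_sum
  proof (intro sum.cong refl)
    fix i k
    have "T k i = cnj (T i k)" by (rule assms)
    thus "cnj (cnj (v i) * T i k * v k) = cnj (v k) * T k i * v i" by (simp add: mult.commute mult.left_commute)
  qed
  also have "\<dots> = QF m T v" unfolding QF_def by (rule sum.swap)
  finally show ?thesis .
qed

lemma QF_real: assumes "\<And>i k. T k i = cnj (T i k)" shows "QF m T v = of_real (Re (QF m T v))"
  using QF_cnj[where T=T and m=m and v=v, OF assms] by (metis Reals_cnj_iff complex_is_Real_iff of_real_Re)

lemma window:
  assumes n: "n \<ge> 1"
  shows "(\<Sum>r<n. \<Sum>r'<n. cnj (v r) * v r' * T r r' * of_int (int n - 1 - \<bar>int r - int r'\<bar>))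
     = (\<Sum>m<2*n. QF n T (\<lambda>r. if r \<le> m \<and> m < r + n - 1 then v r else 0))"
proof -
  have cnt: "(\<Sum>m<2*n. if (r \<le> m \<and> m < r + n - 1) \<and> (r' \<le> m \<and> m < r' + n - 1) then (1::complex) else 0)
      = of_int (int n - 1 - \<bar>int r - int r'\<bar>)" if r: "r < n" "r' < n" for r r'
  proof -
    have "(\<Sum>m<2*n. if (r \<le> m \<and> m < r + n - 1) \<and> (r' \<le> m \<and> m < r' + n - 1) then (1::complex) else 0)
        = (\<Sum>m\<in>{m\<in>{..<2*n}. (r \<le> m \<and> m < r + n - 1) \<and> (r' \<le> m \<and> m < r' + n - 1)}. 1)"
      by (rule sum.inter_filter[OF finite_lessThan, symmetric])
    also have "{m\<in>{..<2*n}. (r \<le> m \<and> m < r + n - 1) \<and> (r' \<le> m \<and> m < r' + n - 1)} = {max r r'..<min r r' + n - 1}"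
      using r by auto
    also have "(\<Sum>m\<in>{max r r'..<min r r' + n - 1}. (1::complex)) = of_int (int n - 1 - \<bar>int r - int r'\<bar>)"
      using r n by (simp add: of_nat_diff max_def min_def)
    finally show ?thesis .
  qed
  have "(\<Sum>m<2*n. QF n T (\<lambda>r. if r \<le> m \<and> m < r + n - 1 then v r else 0))
     = (\<Sum>m<2*n. \<Sum>r<n. \<Sum>r'<n. cnj (v r) * v r' * T r r' *
          (if (r \<le> m \<and> m < r + n - 1) \<and> (r' \<le> m \<and> m < r' + n - 1) then 1 else 0))"
    unfolding QF_def by (intro sum.cong refl) auto
  also have "\<dots> = (\<Sum>r<n. \<Sum>r'<n. \<Sum>m<2*n. cnj (v r) * v r' * T r r' *
          (if (r \<le> m \<and> m < r + n - 1) \<and> (r' \<le> m \<and> m < r' + n - 1) then 1 else 0))"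
    by (rule swap3)
  also have "\<dots> = (\<Sum>r<n. \<Sum>r'<n. cnj (v r) * v r' * T r r' * of_int (int n - 1 - \<bar>int r - int r'\<bar>))"
  proof (intro sum.cong refl)
    fix r r' assume "r \<in> {..<n}" "r' \<in> {..<n}"
    hence "r < n" "r' < n" by auto
    have "(\<Sum>m<2*n. cnj (v r) * v r' * T r r' *
          (if (r \<le> m \<and> m < r + n - 1) \<and> (r' \<le> m \<and> m < r' + n - 1) then 1 else 0))
      = cnj (v r) * v r' * T r r' * (\<Sum>m<2*n.
          (if (r \<le> m \<and> m < r + n - 1) \<and> (r' \<le> m \<and> m < r' + n - 1) then 1 else 0))"
      by (rule sum_distrib_left[symmetric])
    also have "\<dots> = cnj (v r) * v r' * T r r' * of_int (int n - 1 - \<bar>int r - int r'\<bar>)"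
      by (subst cnt[OF \<open>r < n\<close> \<open>r' < n\<close>]) (rule refl)
    finally show "(\<Sum>m<2*n. cnj (v r) * v r' * T r r' *
          (if (r \<le> m \<and> m < r + n - 1) \<and> (r' \<le> m \<and> m < r' + n - 1) then 1 else 0))
      = cnj (v r) * v r' * T r r' * of_int (int n - 1 - \<bar>int r - int r'\<bar>)" .
  qed
  finally show ?thesis by simp
qed

lemma QF_extend: "n \<le> M \<Longrightarrow> QF M T (\<lambda>i. if i < n then w i else 0) = QF n T w"
proof -
  assume nM: "n \<le> M"
  have "QF M T (\<lambda>i. if i < n then w i else 0) = (\<Sum>i<M. \<Sum>k<M. if i < n \<and> k < n then cnj (w i) * T i k * w k else 0)"
    unfolding QF_def by (intro sum.cong refl) auto
  also have "\<dots> = (\<Sum>i<M. if i < n then (\<Sum>k<n. cnj (w i) * T i k * w k) else 0)"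
  proof (intro sum.cong refl)
    fix i
    have "(\<Sum>k<M. if i < n \<and> k < n then cnj (w i) * T i k * w k else 0)
        = (\<Sum>k\<in>{k\<in>{..<M}. k < n}. if i < n then cnj (w i) * T i k * w k else 0)"
      by (subst sum.inter_filter) (auto intro!: sum.cong)
    also have "{k\<in>{..<M}. k < n} = {..<n}" using nM by auto
    finally show "(\<Sum>k<M. if i < n \<and> k < n then cnj (w i) * T i k * w k else 0)
        = (if i < n then (\<Sum>k<n. cnj (w i) * T i k * w k) else 0)" by auto
  qed
  also have "\<dots> = (\<Sum>i\<in>{i\<in>{..<M}. i < n}. (\<Sum>k<n. cnj (w i) * T i k * w k))"
    by (subst sum.inter_filter) auto
  also have "{i\<in>{..<M}. i < n} = {..<n}" using nM by auto
  finally show ?thesis unfolding QF_def .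
qed

lemma ifmul1: "(if P then 1 else 0) * (x::complex) = (if P then x else 0)" by simp
lemma ifmul2: "(x::complex) * (if P then 1 else 0) = (if P then x else 0)" by simp
lemma ifmul3: "(if P then x else 0) * (y::complex) = (if P then x * y else 0)" by simp
lemma ifmul4: "(y::complex) * (if P then x else 0) = (if P then y * x else 0)" by simp
lemma cnj_if01: "cnj (if P then 1 else 0) = (if P then 1 else 0)" by simp
lemmas ifmuls = ifmul1 ifmul2 ifmul3 ifmul4 cnj_if01

lemma QF_e0: "n \<ge> 1 \<Longrightarrow> QF n T (\<lambda>i. if i = 0 then 1 else 0) = T 0 0"
  unfolding QF_def by (simp add: ifmuls sum.delta sum.delta')

lemma beta_e0: "beta n N (\<lambda>i. if i = 0 then 1 else 0) k = (if n \<ge> 1 then 1 else 0)"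
  unfolding beta_def by (simp add: ifmuls sum.delta sum.delta')

lemma claimB_e0:
  assumes N: "N = 2 * M" and nM: "n \<le> M" and n: "n \<ge> 1"
  shows "(\<Sum>k<N. phi M N (toep u) k) = of_nat N * of_nat M * u 0"
proof -
  have "(\<Sum>k<N. phi M N (toep u) k) = (\<Sum>k<N. phi M N (toep u) k *
         (beta n N (\<lambda>i. if i = 0 then 1 else 0) k * cnj (beta n N (\<lambda>i. if i = 0 then 1 else 0) k)))"
    using n by (simp add: beta_e0)
  also have "\<dots> = of_nat N * of_nat M * u 0"
    unfolding claimB[OF N nM n] using n by (simp add: ifmuls sum.delta sum.delta' toep_def)
  finally show ?thesis .
qed



lemma toep_u0_real: "PSDn n (toep u) \<Longrightarrow> n \<ge> 1 \<Longrightarrow> 0 \<le> Re (u 0)"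
  using QF_e0[of n "toep u"] unfolding PSDn_def by (metis toep_def order_refl diff_self_eq_0)

lemma carath:
  assumes n: "n \<ge> 1" and re: "Im (u 0) = 0" and psd: "PSDn n (toep u)" and eps: "\<epsilon> > 0"
  shows "\<exists>N>0. n \<le> N \<and> (\<exists>E. (\<forall>k<N. 0 < E k) \<and> (\<Sum>k<N. E k) \<le> Re (u 0) + \<epsilon> \<and>
     (\<forall>v. Re (QF n (toep u) v) \<le> (\<Sum>k<N. E k * (cmod (beta n N v k))\<^sup>2)))"
proof -
  define a where "a = Re (u 0)"
  have a0: "a \<ge> 0" unfolding a_def using toep_u0_real[OF psd n] .
  define M where "M = 2 * n + nat \<lceil>3 * real (n - 1) * a / \<epsilon>\<rceil>"
  have nM: "n \<le> M" unfolding M_def by simp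
  define \<delta> where "\<delta> = \<epsilon> / 6"
  have d0: "\<delta> > 0" using eps by (simp add: \<delta>_def)
  obtain u' where u': "PSDn M (toep u')" "\<forall>d. 0 < d \<and> d < n \<longrightarrow> u' d = u d"
      "u' 0 = u 0 + complex_of_real \<delta>"
    using extM[OF n re psd nM d0] by blast
  define N where "N = 2 * M"
  have Npos: "N > 0" using nM n by (simp add: N_def)
  define L where "L = real (M - n + 1)"
  have L0: "L > 0" by (simp add: L_def)
  have Lge: "L \<ge> 3 * real (n - 1) * a / \<epsilon>"
  proof -
    have "3 * real (n - 1) * a / \<epsilon> \<le> real (nat \<lceil>3 * real (n - 1) * a / \<epsilon>\<rceil>)"
      by (metis of_nat_nat real_nat_ceiling_ge)
    also have "\<dots> \<le> L" unfolding L_def M_def by simp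
    finally show ?thesis .
  qed
  have Lge2: "L \<ge> real (n - 1)" unfolding L_def M_def by simp
  have re': "Im (u' 0) = 0" using re u'(3) by simp
  have herm': "\<And>i k. toep u' k i = cnj (toep u' i k)" using toep_herm[of u', OF re'] .
  define \<phi> where "\<phi> = (\<lambda>k. phi M N (toep u') k)"
  have \<phi>real: "\<phi> k = of_real (Re (\<phi> k))" for k
    unfolding \<phi>_def phi_def by (rule QF_real[OF herm'])
  have \<phi>nn: "Re (\<phi> k) \<ge> 0" for k
    using u'(1) unfolding \<phi>_def phi_def PSDn_def by blast
  define \<epsilon>' where "\<epsilon>' = \<epsilon> / (3 * real N)"
  have e'0: "\<epsilon>' > 0" using eps Npos by (simp add: \<epsilon>'_def)
  define E where "E = (\<lambda>k. Re (\<phi> k) / (real N * L) + \<epsilon>')"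
  have Epos: "\<forall>k<N. 0 < E k" unfolding E_def using \<phi>nn L0 Npos e'0
    by (simp add: add_nonneg_pos)
  have sumphi: "(\<Sum>k<N. Re (\<phi> k)) = real N * real M * (a + \<delta>)"
  proof -
    have "(\<Sum>k<N. \<phi> k) = of_nat N * of_nat M * u' 0"
      unfolding \<phi>_def by (rule claimB_e0[OF N_def nM n])
    hence "Re (\<Sum>k<N. \<phi> k) = real N * real M * Re (u' 0)" by simp
    thus ?thesis using u'(3) by (simp add: a_def Re_sum)
  qed
  have sumE: "(\<Sum>k<N. E k) \<le> Re (u 0) + \<epsilon>"
  proof -
    have "(\<Sum>k<N. E k) = (\<Sum>k<N. Re (\<phi> k)) / (real N * L) + real N * \<epsilon>'"
      unfolding E_def by (simp add: sum.distrib sum_divide_distrib)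
    also have "\<dots> = real M * (a + \<delta>) / L + \<epsilon> / 3"
      unfolding sumphi \<epsilon>'_def using Npos L0 by (simp add: field_simps)
    also have "real M * (a + \<delta>) / L = (a + \<delta>) + real (n - 1) * (a + \<delta>) / L"
      using L0 nM n unfolding L_def by (simp add: field_simps of_nat_diff)
    also have "real (n - 1) * (a + \<delta>) / L = real (n - 1) * a / L + real (n - 1) / L * \<delta>"
      using L0 by (simp add: field_simps)
    also have "real (n - 1) * a / L \<le> \<epsilon> / 3"
    proof -
      have "real (n - 1) * a \<le> L * \<epsilon> / 3" using Lge eps by (simp add: field_simps)
      thus ?thesis using L0 by (simp add: field_simps)
    qed
    also have "real (n - 1) / L * \<delta> \<le> 1 * \<delta>"
      using Lge2 L0 d0 by (intro mult_right_mono) (simp_all add: field_simps)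
    finally have "(\<Sum>k<N. E k) \<le> a + \<delta> + (\<epsilon> / 3 + 1 * \<delta>) + \<epsilon> / 3" by simp
    thus ?thesis unfolding a_def \<delta>_def by simp
  qed
  have bound: "Re (QF n (toep u) v) \<le> (\<Sum>k<N. E k * (cmod (beta n N v k))\<^sup>2)" for v
  proof -
    define T' where "T' = toep u'"
    define S where "S = (\<Sum>r<n. \<Sum>r'<n. cnj (v r) * v r' * T' r r' * of_int (int M - \<bar>int r - int r'\<bar>))"
    define W where "W = (\<Sum>r<n. \<Sum>r'<n. cnj (v r) * v r' * T' r r' * of_int (int n - 1 - \<bar>int r - int r'\<bar>))"
    have SW: "S = of_real L * QF n T' v + W"
    proof -
      have "S = (\<Sum>r<n. \<Sum>r'<n. of_real L * (cnj (v r) * T' r r' * v r') + cnj (v r) * v r' * T' r r' * of_int (int n - 1 - \<bar>int r - int r'\<bar>))"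
        unfolding S_def
      proof (intro sum.cong refl)
        fix r r'
        have "of_int (int M - \<bar>int r - int r'\<bar>) = (of_real L :: complex) + of_int (int n - 1 - \<bar>int r - int r'\<bar>)"
          unfolding L_def using nM by (simp add: of_nat_diff)
        thus "cnj (v r) * v r' * T' r r' * of_int (int M - \<bar>int r - int r'\<bar>) =
          of_real L * (cnj (v r) * T' r r' * v r') + cnj (v r) * v r' * T' r r' * of_int (int n - 1 - \<bar>int r - int r'\<bar>)"
          by (simp only: distrib_left) (simp add: algebra_simps)
      qed
      thus ?thesis unfolding QF_def W_def by (simp add: sum.distrib sum_distrib_left)
    qed
    have psdn': "0 \<le> Re (QF n T' w)" for w
      using u'(1) QF_extend[OF nM, of T' w] unfolding PSDn_def T'_def by metis
    have W0: "0 \<le> Re W"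
      unfolding W_def window[OF n] Re_sum by (intro sum_nonneg) (rule psdn')
    have T'eq: "QF n T' v = QF n (toep (u(0 := u 0 + complex_of_real \<delta>))) v"
      unfolding T'_def
    proof (rule QF_cong)
      fix i k assume "i < n" "k < n"
      thus "toep u' i k = toep (u(0 := u 0 + complex_of_real \<delta>)) i k"
        using u'(2,3) unfolding toep_def by auto
    qed simp
    have QFT': "Re (QF n (toep u) v) \<le> Re (QF n T' v)"
      unfolding T'eq QF_toep_bump using d0 by (simp add: sum_nonneg)
    have claim: "(\<Sum>k<N. \<phi> k * (beta n N v k * cnj (beta n N v k))) = of_nat N * S"
      unfolding \<phi>_def S_def T'_def by (rule claimB[OF N_def nM n])
    have "(\<Sum>k<N. Re (\<phi> k) * (cmod (beta n N v k))\<^sup>2) = Re (\<Sum>k<N. \<phi> k * (beta n N v k * cnj (beta n N v k)))"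
      unfolding Re_sum
    proof (intro sum.cong refl)
      fix k
      have "\<phi> k * (beta n N v k * cnj (beta n N v k)) = of_real (Re (\<phi> k) * (cmod (beta n N v k))\<^sup>2)"
      proof -
        have b: "beta n N v k * cnj (beta n N v k) = of_real ((cmod (beta n N v k))\<^sup>2)"
          by (rule complex_norm_square[symmetric])
        show ?thesis by (subst \<phi>real) (simp only: b of_real_mult)
      qed
      thus "Re (\<phi> k) * (cmod (beta n N v k))\<^sup>2 = Re (\<phi> k * (beta n N v k * cnj (beta n N v k)))" by simp
    qed
    also have "\<dots> = real N * Re S" unfolding claim by simp
    finally have sphi: "(\<Sum>k<N. Re (\<phi> k) * (cmod (beta n N v k))\<^sup>2) = real N * Re S" .
    have "Re (QF n (toep u) v) \<le> Re (QF n T' v)" by (rule QFT')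
    also have "\<dots> \<le> Re S / L" using SW W0 L0 by (simp add: field_simps)
    also have "\<dots> = (\<Sum>k<N. Re (\<phi> k) * (cmod (beta n N v k))\<^sup>2) / (real N * L)"
      unfolding sphi using Npos by simp
    also have "\<dots> = (\<Sum>k<N. Re (\<phi> k) / (real N * L) * (cmod (beta n N v k))\<^sup>2)"
      by (simp add: sum_divide_distrib)
    also have "\<dots> \<le> (\<Sum>k<N. E k * (cmod (beta n N v k))\<^sup>2)"
      unfolding E_def using e'0 by (intro sum_mono) (simp add: distrib_right)
    finally show ?thesis .
  qed
  have "n \<le> N" using nM by (simp add: N_def)
  thus ?thesis using Npos Epos sumE bound by blast
qed



lemma atom_ex: "atom f \<phi> t = ex (f * real t) * cis \<phi>"
proof -
  have "atom f \<phi> t = cis (2 * pi * f * real t + \<phi>)" unfolding atom_def by (simp add: cis_conv_exp)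
  also have "\<dots> = cis (2 * pi * (f * real t)) * cis \<phi>" by (simp add: cis_mult mult.assoc)
  finally show ?thesis unfolding ex_def .
qed

lemma phase_exists: "\<exists>\<phi>. \<phi> \<in> {0..<2*pi} \<and> c = complex_of_real (cmod c) * cis \<phi>"
proof -
  define \<phi> where "\<phi> = (if Arg c \<ge> 0 then Arg c else Arg c + 2 * pi)"
  have b: "- pi < Arg c" "Arg c \<le> pi" using Arg_bounded by auto
  have "\<phi> \<in> {0..<2*pi}" unfolding \<phi>_def using b pi_gt_zero by auto
  moreover have "cis \<phi> = cis (Arg c)" unfolding \<phi>_def
    by (auto simp: cis_mult[symmetric])
  moreover have "c = complex_of_real (cmod c) * cis (Arg c)"
    using rcis_cmod_Arg[of c] by (simp add: rcis_def)
  ultimately show ?thesis by metis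
qed

lemma an_bdd: "bdd_below {(\<Sum>k<m. cmod (c k)) | (m::nat) (c::nat \<Rightarrow> complex) (f::nat \<Rightarrow> real) (\<phi>::nat \<Rightarrow> real).
      (\<forall>k<m. f k \<in> {0..1} \<and> \<phi> k \<in> {0..<2*pi}) \<and>
      (\<forall>t<n. x t = (\<Sum>k<m. complex_of_real (cmod (c k)) * atom (f k) (\<phi> k) t))}"
  by (rule bdd_belowI[of _ 0]) (auto intro: sum_nonneg)

lemma an_le:
  fixes m :: nat and c :: "nat \<Rightarrow> complex" and f :: "nat \<Rightarrow> real"
  assumes f: "\<forall>k<m. f k \<in> {0..1}"
    and x: "\<forall>t<n. x t = (\<Sum>k<m. c k * ex (f k * real t))"
  shows "atomic_norm n x \<le> (\<Sum>k<m. cmod (c k))"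
proof -
  have "\<forall>k. \<exists>p. p \<in> {0..<2*pi} \<and> c k = complex_of_real (cmod (c k)) * cis p"
    using phase_exists by blast
  then obtain \<phi> where ph: "\<And>k. \<phi> k \<in> {0..<2*pi} \<and> c k = complex_of_real (cmod (c k)) * cis (\<phi> k)"
    by metis
  have "\<forall>t<n. x t = (\<Sum>k<m. complex_of_real (cmod (c k)) * atom (f k) (\<phi> k) t)"
  proof (intro allI impI)
    fix t assume "t < n"
    hence "x t = (\<Sum>k<m. c k * ex (f k * real t))" using x by simp
    also have "\<dots> = (\<Sum>k<m. complex_of_real (cmod (c k)) * atom (f k) (\<phi> k) t)"
    proof (rule sum.cong[OF refl])
      fix k
      have "c k * ex (f k * real t) = complex_of_real (cmod (c k)) * cis (\<phi> k) * ex (f k * real t)"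
        using ph[of k] by metis
      thus "c k * ex (f k * real t) = complex_of_real (cmod (c k)) * atom (f k) (\<phi> k) t"
        by (simp add: atom_ex mult.commute mult.left_commute)
    qed
    finally show "x t = (\<Sum>k<m. complex_of_real (cmod (c k)) * atom (f k) (\<phi> k) t)" .
  qed
  hence "(\<Sum>k<m. cmod (c k)) \<in> {(\<Sum>k<m. cmod (c k)) | (m::nat) (c::nat \<Rightarrow> complex) (f::nat \<Rightarrow> real) (\<phi>::nat \<Rightarrow> real).
      (\<forall>k<m. f k \<in> {0..1} \<and> \<phi> k \<in> {0..<2*pi}) \<and>
      (\<forall>t<n. x t = (\<Sum>k<m. complex_of_real (cmod (c k)) * atom (f k) (\<phi> k) t))}"
    using f ph by blast
  thus ?thesis unfolding atomic_norm_def by (rule cInf_lower[OF _ an_bdd])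
qed

lemma an_nonempty: "n \<ge> 1 \<Longrightarrow> \<exists>(m::nat) (c::nat\<Rightarrow>complex) (f::nat\<Rightarrow>real). (\<forall>k<m. f k \<in> {0..1}) \<and> (\<forall>t<n. x t = (\<Sum>k<m. c k * ex (f k * real t)))"
proof -
  assume n: "n \<ge> 1"
  define c where "c = (\<lambda>k. (\<Sum>s<n. x s * ex (- (real k * real s / real n))) / of_nat n)"
  define f where "f = (\<lambda>k. real k / real n)"
  have "\<forall>k<n. f k \<in> {0..1}" unfolding f_def by auto
  moreover have "\<forall>t<n. x t = (\<Sum>k<n. c k * ex (f k * real t))"
  proof (intro allI impI)
    fix t assume t: "t < n"
    have "(\<Sum>k<n. c k * ex (f k * real t)) = (\<Sum>k<n. \<Sum>s<n. x s * ex (real k * of_int (int t - int s) / real n)) / of_nat n"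
      unfolding c_def f_def sum_divide_distrib sum_distrib_right
    proof (intro sum.cong refl)
      fix k s
      have "ex (- (real k * real s / real n)) * ex (real k / real n * real t) = ex (real k * of_int (int t - int s) / real n)"
        unfolding ex_add[symmetric] by (rule arg_cong[where f=ex]) (simp add: diff_divide_distrib algebra_simps)
      thus "x s * ex (- (real k * real s / real n)) / of_nat n * ex (real k / real n * real t) =
          x s * ex (real k * of_int (int t - int s) / real n) / of_nat n"
        by (simp add: mult.assoc)
    qed
    also have "\<dots> = (\<Sum>s<n. x s * (\<Sum>k<n. ex (real k * of_int (int t - int s) / real n))) / of_nat n"
      by (subst sum.swap) (simp add: sum_distrib_left)
    also have "\<dots> = (\<Sum>s<n. if s = t then x s * of_nat n else 0) / of_nat n"
    proof -
      have "(\<Sum>k<n. ex (real k * of_int (int t - int s) / real n)) = (if s = t then of_nat n else 0)"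
        if "s < n" for s
        using geo_sum[of n "int t - int s"] n t that by auto
      thus ?thesis by (intro arg_cong2[where f="(/)"] sum.cong refl) auto
    qed
    also have "\<dots> = x t" using t n by (simp add: sum.delta')
    finally show "x t = (\<Sum>k<n. c k * ex (f k * real t))" by simp
  qed
  ultimately show ?thesis by blast
qed



definition gmap :: "nat \<Rightarrow> nat \<Rightarrow> (nat \<Rightarrow> real) \<Rightarrow> (nat \<Rightarrow> complex) \<Rightarrow> nat \<Rightarrow> complex" where
  "gmap n N E w r = (\<Sum>k<N. of_real (E k) * cnj (beta n N w k) * ex (real k * real r / real N))"

lemma cnj_beta: "cnj (beta n N w k) = (\<Sum>r<n. w r * ex (- (real k * real r / real N)))"
  unfolding beta_def cnj_sum by (simp add: ex_cnj)

lemma grid_gram: "(\<Sum>r<n. cnj (w r) * gmap n N E w r) = (\<Sum>k<N. of_real (E k) * (beta n N w k * cnj (beta n N w k)))"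
proof -
  have "(\<Sum>r<n. cnj (w r) * gmap n N E w r) = (\<Sum>k<N. \<Sum>r<n. of_real (E k) * cnj (beta n N w k) * (cnj (w r) * ex (real k * real r / real N)))"
    unfolding gmap_def sum_distrib_left by (subst sum.swap) (simp add: algebra_simps)
  also have "\<dots> = (\<Sum>k<N. of_real (E k) * cnj (beta n N w k) * beta n N w k)"
    unfolding beta_def by (simp add: sum_distrib_left)
  finally show ?thesis by (simp add: algebra_simps)
qed

lemma parseval:
  assumes N: "N > 0" and nN: "n \<le> N"
  shows "(\<Sum>k<N. beta n N v k * cnj (beta n N v k)) = of_nat N * (\<Sum>r<n. cnj (v r) * v r)"
proof -
  have "(\<Sum>k<N. beta n N v k * cnj (beta n N v k)) =
     (\<Sum>k<N. \<Sum>r<n. \<Sum>r'<n. cnj (v r) * v r' * ex (real k * of_int (int r - int r') / real N))"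
    unfolding beta_def cnj_sum sum_product
  proof (intro sum.cong refl)
    fix k r r'
    have "ex (real k * real r / real N) * ex (- (real k * real r' / real N)) = ex (real k * of_int (int r - int r') / real N)"
      unfolding ex_add[symmetric] by (rule arg_cong[where f=ex]) (simp add: diff_divide_distrib algebra_simps)
    thus "cnj (v r) * ex (real k * real r / real N) * cnj (cnj (v r') * ex (real k * real r' / real N)) =
       cnj (v r) * v r' * ex (real k * of_int (int r - int r') / real N)"
      by (simp add: ex_cnj algebra_simps)
  qed
  also have "\<dots> = (\<Sum>r<n. \<Sum>r'<n. \<Sum>k<N. cnj (v r) * v r' * ex (real k * of_int (int r - int r') / real N))"
    by (rule swap3)
  also have "\<dots> = (\<Sum>r<n. \<Sum>r'<n. if r' = r then cnj (v r) * v r' * of_nat N else 0)"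
  proof (intro sum.cong refl)
    fix r r' assume "r \<in> {..<n}" "r' \<in> {..<n}"
    hence "\<bar>int r - int r'\<bar> < int N" using nN by auto
    thus "(\<Sum>k<N. cnj (v r) * v r' * ex (real k * of_int (int r - int r') / real N)) =
        (if r' = r then cnj (v r) * v r' * of_nat N else 0)"
    proof -
      assume b: "\<bar>int r - int r'\<bar> < int N"
      have g: "(\<Sum>k<N. ex (real k * of_int (int r - int r') / real N)) = (if int r - int r' = 0 then of_nat N else 0)"
        by (rule geo_sum[OF N b])
      show ?thesis by (simp only: sum_distrib_left[symmetric] g) auto
    qed
  qed
  also have "\<dots> = of_nat N * (\<Sum>r<n. cnj (v r) * v r)"
    by (simp add: sum.delta sum_distrib_left algebra_simps)
  finally show ?thesis .
qed

lemma grid_solve: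
  assumes N: "N > 0" and nN: "n \<le> N" and E: "\<forall>k<N. 0 < E k"
  shows "\<exists>w. \<forall>r<n. gmap n N E w r = z r"
proof -
  define G where "G = (\<lambda>r r'. \<Sum>k<N. of_real (E k) * ex (real k * real r / real N) * ex (- (real k * real r' / real N)))"
  have mapG: "(\<Sum>r'<n. G r r' * w r') = gmap n N E w r" for w r
    unfolding G_def gmap_def cnj_beta sum_distrib_right sum_distrib_left
    by (subst sum.swap) (simp add: algebra_simps)
  have inj: "\<forall>i<n. v i = 0" if h: "\<forall>i<n. (\<Sum>k<n. G i k * v k) = 0" for v
  proof -
    have g0: "\<forall>r<n. gmap n N E v r = 0" using h mapG by simp
    have "(\<Sum>k<N. of_real (E k) * (beta n N v k * cnj (beta n N v k))) = 0"
      unfolding grid_gram[symmetric] using g0 by simp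
    hence "(\<Sum>k<N. E k * (cmod (beta n N v k))\<^sup>2) = 0"
      by (metis (no_types, lifting) Re_complex_of_real complex_norm_square of_real_mult of_real_sum sum.cong zero_complex.simps(1))
    hence z: "\<forall>k\<in>{..<N}. E k * (cmod (beta n N v k))\<^sup>2 = 0"
      using E by (subst sum_nonneg_eq_0_iff[symmetric]) (auto intro: sum_nonneg)
    have b0: "beta n N v k = 0" if k: "k < N" for k
    proof -
      have "E k = 0 \<or> beta n N v k = 0" using z k by auto
      moreover have "E k > 0" using E k by auto
      ultimately show ?thesis by auto
    qed
    have "of_nat N * (\<Sum>r<n. cnj (v r) * v r) = 0"
      unfolding parseval[OF N nN, symmetric] using b0 by simp
    hence X: "(\<Sum>r<n. cnj (v r) * v r) = 0" using N by simp
    have "Re (\<Sum>r<n. cnj (v r) * v r) = (\<Sum>r<n. (cmod (v r))\<^sup>2)"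
      by (unfold sum_cnj_sq) (rule Re_complex_of_real)
    hence "(\<Sum>r<n. (cmod (v r))\<^sup>2) = 0" using X by simp
    hence "\<forall>r\<in>{..<n}. (cmod (v r))\<^sup>2 = 0" by (subst sum_nonneg_eq_0_iff[symmetric]) auto
    thus ?thesis by simp
  qed
  obtain w where w: "\<forall>i<n. (\<Sum>k<n. G i k * w k) = z i" using solve_lin[OF inj] by blast
  thus ?thesis using mapG by auto
qed

lemma an_grid:
  assumes N: "N > 0" and E: "\<forall>k<N. 0 \<le> E k" and z: "\<forall>r<n. z r = gmap n N E w r"
  shows "atomic_norm n z \<le> (\<Sum>k<N. E k) / 2 + (\<Sum>k<N. E k * (cmod (beta n N w k))\<^sup>2) / 2"
proof -
  have "atomic_norm n z \<le> (\<Sum>k<N. cmod (of_real (E k) * cnj (beta n N w k)))"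
  proof (rule an_le)
    show "\<forall>k<N. real k / real N \<in> {0..1}" by auto
    show "\<forall>t<n. z t = (\<Sum>k<N. complex_of_real (E k) * cnj (beta n N w k) * ex (real k / real N * real t))"
      using z unfolding gmap_def by simp
  qed
  also have "\<dots> \<le> (\<Sum>k<N. (E k + E k * (cmod (beta n N w k))\<^sup>2) / 2)"
  proof (rule sum_mono)
    fix k assume "k \<in> {..<N}"
    hence Ek: "E k \<ge> 0" using E by auto
    have "cmod (beta n N w k) \<le> (1 + (cmod (beta n N w k))\<^sup>2) / 2"
      using sum_squares_bound[of 1 "cmod (beta n N w k)"] by (simp add: power2_eq_square)
    hence "E k * cmod (beta n N w k) \<le> E k * ((1 + (cmod (beta n N w k))\<^sup>2) / 2)"
      using Ek by (rule mult_left_mono)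
    thus "cmod (of_real (E k) * cnj (beta n N w k)) \<le> (E k + E k * (cmod (beta n N w k))\<^sup>2) / 2"
      using Ek by (simp add: norm_mult algebra_simps)
  qed
  also have "\<dots> = (\<Sum>k<N. E k) / 2 + (\<Sum>k<N. E k * (cmod (beta n N w k))\<^sup>2) / 2"
    by (simp add: sum.distrib sum_divide_distrib[symmetric] add_divide_distrib)
  finally show ?thesis .
qed



lemma sum_blocks: fixes m n :: nat shows "(\<Sum>i<m*n. f i) = (\<Sum>b<m. \<Sum>s<n. (f (b*n+s) :: complex))"
proof (induction m)
  case 0 thus ?case by simp
next
  case (Suc m)
  have "(\<Sum>i\<in>{0..<m*n}. f i) + (\<Sum>i\<in>{m*n..<m*n+n}. f i) = (\<Sum>i\<in>{0..<m*n+n}. f i)"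
    by (rule sum.atLeastLessThan_concat) auto
  hence "(\<Sum>i<Suc m * n. f i) = (\<Sum>i\<in>{0..<m*n}. f i) + (\<Sum>i\<in>{m*n..<m*n+n}. f i)"
    by (simp add: atLeast0LessThan add.commute)
  also have "(\<Sum>i\<in>{m*n..<m*n+n}. f i) = (\<Sum>s\<in>{0..<n}. f (m*n+s))"
    using sum.shift_bounds_nat_ivl[of f 0 "m*n" n] by (simp add: add.commute)
  finally show ?case using Suc by (simp add: atLeast0LessThan)
qed

lemma lmi_QF:
  fixes u :: "nat \<Rightarrow> nat \<Rightarrow> complex" and z :: "nat \<Rightarrow> nat \<Rightarrow> complex" and n J :: nat
  assumes n: "n \<ge> 1"
  defines "N0 \<equiv> (J + 1) * n"
  shows "QF (Suc N0) (lmi_matrix n J u t z) v =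
     (\<Sum>b<Suc J. QF n (toep (u b)) (\<lambda>s. v (b*n+s)))
   + (\<Sum>b<Suc J. \<Sum>s<n. cnj (v (b*n+s)) * z b s * v N0)
   + (\<Sum>b<Suc J. \<Sum>s<n. cnj (v N0) * cnj (z b s) * v (b*n+s))
   + cnj (v N0) * complex_of_real t * v N0"
proof -
  have dm: "(b*n+s) div n = b" "(b*n+s) mod n = s" if "s < n" for b s
    using that n by auto
  have lt: "b*n+s < n + J * n" if "b < Suc J" "s < n" for b s
  proof -
    have "b*n+s < b*n+n" using that by simp
    also have "\<dots> = Suc b * n" by simp
    also have "\<dots> \<le> (J+1)*n" using that by (intro mult_right_mono) auto
    finally show ?thesis by simp
  qed
  let ?M = "lmi_matrix n J u t z"
  have A: "QF N0 ?M v = (\<Sum>b<Suc J. QF n (toep (u b)) (\<lambda>s. v (b*n+s)))"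
  proof -
    have "QF N0 ?M v = (\<Sum>b<Suc J. \<Sum>s<n. \<Sum>b'<Suc J. \<Sum>s'<n.
           cnj (v (b*n+s)) * ?M (b*n+s) (b'*n+s') * v (b'*n+s'))"
      unfolding QF_def N0_def using sum_blocks[of _ "Suc J" n] by simp
    also have "\<dots> = (\<Sum>b<Suc J. \<Sum>s<n. \<Sum>b'<Suc J. if b' = b then (\<Sum>s'<n.
           cnj (v (b*n+s)) * toep (u b) s s' * v (b*n+s')) else 0)"
    proof (intro sum.cong refl)
      fix b s b' assume b: "b \<in> {..<Suc J}" "s \<in> {..<n}" "b' \<in> {..<Suc J}"
      show "(\<Sum>s'<n. cnj (v (b*n+s)) * ?M (b*n+s) (b'*n+s') * v (b'*n+s')) =
         (if b' = b then (\<Sum>s'<n. cnj (v (b*n+s)) * toep (u b) s s' * v (b*n+s')) else 0)"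
        using b by (auto intro!: sum.cong simp: lmi_matrix_def Let_def dm lt)
    qed
    also have "\<dots> = (\<Sum>b<Suc J. QF n (toep (u b)) (\<lambda>s. v (b*n+s)))"
      unfolding QF_def by (simp add: sum.delta)
    finally show ?thesis .
  qed
  have B: "(\<Sum>k<N0. cnj (v N0) * ?M N0 k * v k) = (\<Sum>b<Suc J. \<Sum>s<n. cnj (v N0) * cnj (z b s) * v (b*n+s))"
  proof -
    have "(\<Sum>k<N0. cnj (v N0) * ?M N0 k * v k) = (\<Sum>b<Suc J. \<Sum>s<n. cnj (v N0) * ?M N0 (b*n+s) * v (b*n+s))"
      using sum_blocks[of "\<lambda>k. cnj (v N0) * ?M N0 k * v k" "Suc J" n] by (simp add: N0_def)
    also have "\<dots> = (\<Sum>b<Suc J. \<Sum>s<n. cnj (v N0) * cnj (z b s) * v (b*n+s))"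
      by (intro sum.cong refl) (auto simp: lmi_matrix_def Let_def dm lt N0_def)
    finally show ?thesis .
  qed
  have C: "(\<Sum>i<N0. cnj (v i) * ?M i N0 * v N0) = (\<Sum>b<Suc J. \<Sum>s<n. cnj (v (b*n+s)) * z b s * v N0)"
  proof -
    have "(\<Sum>i<N0. cnj (v i) * ?M i N0 * v N0) = (\<Sum>b<Suc J. \<Sum>s<n. cnj (v (b*n+s)) * ?M (b*n+s) N0 * v N0)"
      using sum_blocks[of "\<lambda>i. cnj (v i) * ?M i N0 * v N0" "Suc J" n] by (simp add: N0_def)
    also have "\<dots> = (\<Sum>b<Suc J. \<Sum>s<n. cnj (v (b*n+s)) * z b s * v N0)"
      by (intro sum.cong refl) (auto simp: lmi_matrix_def Let_def dm lt N0_def)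
    finally show ?thesis .
  qed
  have D: "?M N0 N0 = complex_of_real t" unfolding N0_def by (simp add: lmi_matrix_def Let_def)
  show ?thesis unfolding QF_splitl A B C D by simp
qed



abbreviation "ANset n x \<equiv> {(\<Sum>k<m. cmod (c k)) | (m::nat) (c::nat \<Rightarrow> complex) (f::nat \<Rightarrow> real) (\<phi>::nat \<Rightarrow> real).
      (\<forall>k<m. f k \<in> {0..1} \<and> \<phi> k \<in> {0..<2*pi}) \<and>
      (\<forall>t<n. x t = (\<Sum>k<m. complex_of_real (cmod (c k)) * atom (f k) (\<phi> k) t))}"

lemma ANset_ne: "n \<ge> 1 \<Longrightarrow> ANset n x \<noteq> {}"
proof -
  assume n: "n \<ge> 1"
  obtain m :: nat and c :: "nat \<Rightarrow> complex" and f :: "nat \<Rightarrow> real" where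
    d: "\<forall>k<m. f k \<in> {0..1}" "\<forall>t<n. x t = (\<Sum>k<m. c k * ex (f k * real t))"
    using an_nonempty[OF n, of x] by blast
  have "\<forall>k. \<exists>p. p \<in> {0..<2*pi} \<and> c k = complex_of_real (cmod (c k)) * cis p"
    using phase_exists by blast
  then obtain \<phi> where ph: "\<And>k. \<phi> k \<in> {0..<2*pi} \<and> c k = complex_of_real (cmod (c k)) * cis (\<phi> k)"
    by metis
  have "\<forall>t<n. x t = (\<Sum>k<m. complex_of_real (cmod (c k)) * atom (f k) (\<phi> k) t)"
  proof (intro allI impI)
    fix t assume "t < n"
    hence "x t = (\<Sum>k<m. c k * ex (f k * real t))" using d by simp
    also have "\<dots> = (\<Sum>k<m. complex_of_real (cmod (c k)) * atom (f k) (\<phi> k) t)"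
    proof (rule sum.cong[OF refl])
      fix k
      have "c k * ex (f k * real t) = complex_of_real (cmod (c k)) * cis (\<phi> k) * ex (f k * real t)"
        using ph[of k] by metis
      thus "c k * ex (f k * real t) = complex_of_real (cmod (c k)) * atom (f k) (\<phi> k) t"
        by (simp add: atom_ex mult.commute mult.left_commute)
    qed
    finally show "x t = (\<Sum>k<m. complex_of_real (cmod (c k)) * atom (f k) (\<phi> k) t)" .
  qed
  thus ?thesis using d(1) ph by blast
qed

lemma an_nonneg: "n \<ge> 1 \<Longrightarrow> 0 \<le> atomic_norm n x"
  unfolding atomic_norm_def by (rule cInf_greatest[OF ANset_ne]) (auto intro: sum_nonneg)

lemma an_approx:
  assumes n: "n \<ge> 1" and e: "e > 0"
  shows "\<exists>m::nat. \<exists>\<rho> f \<phi>. (\<forall>k<m. 0 \<le> \<rho> k \<and> f k \<in> {0..1}) \<and>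
      (\<forall>t<n. x t = (\<Sum>k<m. complex_of_real (\<rho> k) * atom (f k) (\<phi> k) t)) \<and>
      (\<Sum>k<m. \<rho> k) < atomic_norm n x + e"
proof -
  have "Inf (ANset n x) < atomic_norm n x + e" using e unfolding atomic_norm_def by simp
  from cInf_lessD[OF ANset_ne[OF n] this] obtain y where "y \<in> ANset n x" "y < atomic_norm n x + e" by blast
  then obtain m c f \<phi> where "y = (\<Sum>k<m::nat. cmod (c k))" "\<forall>k<m. f k \<in> {0..1} \<and> \<phi> k \<in> {0..<2*pi}"
     "\<forall>t<n. x t = (\<Sum>k<m. complex_of_real (cmod (c k)) * atom (f k) (\<phi> k) t)" by blast
  thus ?thesis using \<open>y < _\<close> by (intro exI[of _ m] exI[of _ "\<lambda>k. cmod (c k)"] exI[of _ f] exI[of _ \<phi>]) auto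
qed

lemma mtrace_toep: "mtrace n (toep w) = of_nat n * w 0"
  unfolding mtrace_def toep_def by simp

lemma sum_0J: "f 0 + (\<Sum>j=1..J. f j) = (\<Sum>b<Suc J. (f b :: 'a :: comm_monoid_add))"
  by (simp only: sum.lessThan_Suc_shift One_nat_def sum.atLeast1_atMost_eq)

lemma obj_eq:
  assumes n: "n \<ge> 1"
  shows "Re (mtrace n (toep (u 0)) + (\<Sum>j=1..J. mtrace n (toep (u j)))) / (2 * real n) + t / 2
       = (\<Sum>b<Suc J. Re (u b 0)) / 2 + t / 2"
proof -
  have "mtrace n (toep (u 0)) + (\<Sum>j=1..J. mtrace n (toep (u j))) = (\<Sum>b<Suc J. of_nat n * u b 0)"
    unfolding mtrace_toep by (rule sum_0J)
  hence "Re (mtrace n (toep (u 0)) + (\<Sum>j=1..J. mtrace n (toep (u j)))) = real n * (\<Sum>b<Suc J. Re (u b 0))"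
    by (simp add: Re_sum sum_distrib_left distrib_left)
  thus ?thesis using n by simp
qed

lemma toep_atoms:
  "toep (\<lambda>d. \<Sum>k<m. complex_of_real (\<rho> k) * ex (f k * real d)) s s'
     = (\<Sum>k<m. complex_of_real (\<rho> k) * (ex (f k * real s) * cnj (ex (f k * real s'))))"
proof (cases "s' \<le> s")
  case True
  have "ex (f k * real (s - s')) = ex (f k * real s) * cnj (ex (f k * real s'))" for k
    unfolding ex_cnj ex_add[symmetric] using True by (simp add: of_nat_diff algebra_simps)
  thus ?thesis using True unfolding toep_def by simp
next
  case False
  have "cnj (ex (f k * real (s' - s))) = ex (f k * real s) * cnj (ex (f k * real s'))" for k
    unfolding ex_cnj ex_add[symmetric] using False by (simp add: of_nat_diff algebra_simps)
  thus ?thesis using False unfolding toep_def by (simp add: cnj_sum)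
qed

lemma construct:
  fixes Z :: "nat \<Rightarrow> nat \<Rightarrow> complex" and m :: "nat \<Rightarrow> nat" and \<rho> f \<phi> :: "nat \<Rightarrow> nat \<Rightarrow> real"
    and n J :: nat
  assumes n: "n \<ge> 1"
    and dec: "\<forall>b<Suc J. \<forall>t<n. Z b t = (\<Sum>k<m b. complex_of_real (\<rho> b k) * atom (f b k) (\<phi> b k) t)"
  defines "u \<equiv> (\<lambda>b d. \<Sum>k<m b. complex_of_real (\<rho> b k) * ex (f b k * real d))"
    and "tt \<equiv> (\<Sum>b<Suc J. \<Sum>k<m b. \<rho> b k)"
  shows "\<forall>v. QF ((J+1)*n+1) (lmi_matrix n J u tt Z) v = complex_of_real
      (\<Sum>b<Suc J. \<Sum>k<m b. \<rho> b k * (cmod (cis (\<phi> b k) * (\<Sum>s<n. cnj (v (b*n+s)) * ex (f b k * real s)) + cnj (v ((J+1)*n))))\<^sup>2)"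
proof
  fix v
  define N0 where "N0 = (J+1)*n"
  define A where "A = (\<lambda>b k. \<Sum>s<n. cnj (v (b*n+s)) * ex (f b k * real s))"
  define p where "p = (\<lambda>b k. cis (\<phi> b k) * A b k + cnj (v N0))"
  have cA: "cnj (A b k) = (\<Sum>s<n. v (b*n+s) * cnj (ex (f b k * real s)))" for b k
    unfolding A_def cnj_sum by simp
  have Q1: "QF n (toep (u b)) (\<lambda>s. v (b*n+s)) = (\<Sum>k<m b. complex_of_real (\<rho> b k) * (A b k * cnj (A b k)))" for b
  proof -
    have "QF n (toep (u b)) (\<lambda>s. v (b*n+s)) = (\<Sum>s<n. \<Sum>s'<n. \<Sum>k<m b.
        complex_of_real (\<rho> b k) * ((cnj (v (b*n+s)) * ex (f b k * real s)) * (v (b*n+s') * cnj (ex (f b k * real s')))))"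
      unfolding QF_def u_def toep_atoms by (simp add: sum_distrib_left sum_distrib_right algebra_simps)
    also have "\<dots> = (\<Sum>k<m b. \<Sum>s<n. \<Sum>s'<n.
        complex_of_real (\<rho> b k) * ((cnj (v (b*n+s)) * ex (f b k * real s)) * (v (b*n+s') * cnj (ex (f b k * real s')))))"
      by (rule swap3[symmetric])
    also have "\<dots> = (\<Sum>k<m b. complex_of_real (\<rho> b k) * (A b k * cnj (A b k)))"
    proof (rule sum.cong[OF refl])
      fix k
      show "(\<Sum>s<n. \<Sum>s'<n. complex_of_real (\<rho> b k) * ((cnj (v (b*n+s)) * ex (f b k * real s)) * (v (b*n+s') * cnj (ex (f b k * real s')))))
        = complex_of_real (\<rho> b k) * (A b k * cnj (A b k))"
        by (unfold cA, unfold A_def, unfold sum_product, unfold sum_distrib_left, rule refl)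
    qed
    finally show ?thesis .
  qed
  have Q2: "(\<Sum>s<n. cnj (v (b*n+s)) * Z b s * v N0) = (\<Sum>k<m b. complex_of_real (\<rho> b k) * (cis (\<phi> b k) * A b k * v N0))"
    if b: "b < Suc J" for b
  proof -
    have "(\<Sum>s<n. cnj (v (b*n+s)) * Z b s * v N0) = (\<Sum>s<n. \<Sum>k<m b.
        complex_of_real (\<rho> b k) * (cis (\<phi> b k) * (cnj (v (b*n+s)) * ex (f b k * real s)) * v N0))"
      using dec b by (intro sum.cong refl) (simp add: atom_ex sum_distrib_left sum_distrib_right algebra_simps)
    also have "\<dots> = (\<Sum>k<m b. complex_of_real (\<rho> b k) * (cis (\<phi> b k) * A b k * v N0))"
      by (subst sum.swap) (simp add: A_def sum_distrib_left sum_distrib_right algebra_simps)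
    finally show ?thesis .
  qed
  have Q3: "(\<Sum>s<n. cnj (v N0) * cnj (Z b s) * v (b*n+s)) = (\<Sum>k<m b. complex_of_real (\<rho> b k) * (cnj (cis (\<phi> b k)) * cnj (A b k) * cnj (v N0)))"
    if b: "b < Suc J" for b
  proof -
    have "(\<Sum>s<n. cnj (v N0) * cnj (Z b s) * v (b*n+s)) = (\<Sum>s<n. \<Sum>k<m b.
        complex_of_real (\<rho> b k) * (cnj (cis (\<phi> b k)) * (v (b*n+s) * cnj (ex (f b k * real s))) * cnj (v N0)))"
      using dec b by (intro sum.cong refl) (simp add: atom_ex cnj_sum sum_distrib_left sum_distrib_right algebra_simps)
    also have "\<dots> = (\<Sum>k<m b. complex_of_real (\<rho> b k) * (cnj (cis (\<phi> b k)) * cnj (A b k) * cnj (v N0)))"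
      by (subst sum.swap) (simp add: cA sum_distrib_left sum_distrib_right algebra_simps)
    finally show ?thesis .
  qed
  have Q4: "cnj (v N0) * complex_of_real tt * v N0 = (\<Sum>b<Suc J. \<Sum>k<m b. complex_of_real (\<rho> b k) * (cnj (v N0) * v N0))"
    unfolding tt_def by (simp add: sum_distrib_left sum_distrib_right algebra_simps)
  have pp: "p b k * cnj (p b k) = A b k * cnj (A b k) + cis (\<phi> b k) * A b k * v N0
      + cnj (cis (\<phi> b k)) * cnj (A b k) * cnj (v N0) + cnj (v N0) * v N0" for b k
  proof -
    have c1: "cis (\<phi> b k) * cnj (cis (\<phi> b k)) = 1" by (simp add: cis_cnj cis_mult)
    have "p b k * cnj (p b k) = (cis (\<phi> b k) * cnj (cis (\<phi> b k))) * (A b k * cnj (A b k)) + cis (\<phi> b k) * A b k * v N0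
      + cnj (cis (\<phi> b k)) * cnj (A b k) * cnj (v N0) + cnj (v N0) * v N0"
      unfolding p_def by (simp add: algebra_simps)
    thus ?thesis unfolding c1 by simp
  qed
  have "QF (Suc N0) (lmi_matrix n J u tt Z) v =
     (\<Sum>b<Suc J. \<Sum>k<m b. complex_of_real (\<rho> b k) * (p b k * cnj (p b k)))"
  proof -
    have S2: "(\<Sum>b<Suc J. \<Sum>s<n. cnj (v (b*n+s)) * Z b s * v N0) = (\<Sum>b<Suc J. \<Sum>k<m b. complex_of_real (\<rho> b k) * (cis (\<phi> b k) * A b k * v N0))"
      by (rule sum.cong[OF refl]) (simp add: Q2)
    have S3: "(\<Sum>b<Suc J. \<Sum>s<n. cnj (v N0) * cnj (Z b s) * v (b*n+s)) = (\<Sum>b<Suc J. \<Sum>k<m b. complex_of_real (\<rho> b k) * (cnj (cis (\<phi> b k)) * cnj (A b k) * cnj (v N0)))"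
      by (rule sum.cong[OF refl]) (simp add: Q3)
    show ?thesis
      unfolding lmi_QF[OF n, of J u tt Z v, folded N0_def] Q1 Q4 pp S2 S3
      by (simp only: distrib_left sum.distrib)
  qed
  also have "\<dots> = complex_of_real (\<Sum>b<Suc J. \<Sum>k<m b. \<rho> b k * (cmod (p b k))\<^sup>2)"
    by (simp only: of_real_sum of_real_mult complex_norm_square)
  finally show "QF ((J+1)*n+1) (lmi_matrix n J u tt Z) v = complex_of_real
      (\<Sum>b<Suc J. \<Sum>k<m b. \<rho> b k * (cmod (cis (\<phi> b k) * (\<Sum>s<n. cnj (v (b*n+s)) * ex (f b k * real s)) + cnj (v ((J+1)*n))))\<^sup>2)"
    unfolding p_def A_def N0_def by simp
qed



lemma psd_QF: "psd N M = (\<forall>v. QF N M v \<in> \<real> \<and> 0 \<le> Re (QF N M v))"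
  unfolding psd_def QF_def ..

definition embed :: "nat \<Rightarrow> nat \<Rightarrow> (nat \<Rightarrow> nat \<Rightarrow> complex) \<Rightarrow> complex \<Rightarrow> nat \<Rightarrow> complex" where
  "embed n J W c = (\<lambda>i. if i < (J+1)*n then W (i div n) (i mod n) else c)"

lemma embed_at: assumes "b < Suc J" "s < n" shows "embed n J W c (b*n+s) = W b s"
proof -
  have "b*n+s < b*n+n" using assms by simp
  also have "\<dots> = Suc b * n" by simp
  also have "\<dots> \<le> (J+1)*n" using assms by (intro mult_right_mono) auto
  finally show ?thesis using assms unfolding embed_def by simp
qed

lemma embed_N0: "embed n J W c ((J+1)*n) = c" unfolding embed_def by simp
lemma embed_N0': "embed n J W c (n + J*n) = c" unfolding embed_def by simp

lemma lmi_QF_embed: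
  fixes u z :: "nat \<Rightarrow> nat \<Rightarrow> complex" and n J :: nat
  assumes n: "n \<ge> 1"
  shows "QF ((J+1)*n+1) (lmi_matrix n J u t z) (embed n J W c) =
     (\<Sum>b<Suc J. QF n (toep (u b)) (W b))
   + (\<Sum>b<Suc J. \<Sum>s<n. cnj (W b s) * z b s * c)
   + (\<Sum>b<Suc J. \<Sum>s<n. cnj c * cnj (z b s) * W b s)
   + cnj c * complex_of_real t * c"
proof -
  have e1: "(\<Sum>b<Suc J. QF n (toep (u b)) (\<lambda>s. embed n J W c (b*n+s))) = (\<Sum>b<Suc J. QF n (toep (u b)) (W b))"
    by (intro sum.cong refl QF_cong) (auto simp: embed_at)
  have e2: "(\<Sum>b<Suc J. \<Sum>s<n. cnj (embed n J W c (b*n+s)) * z b s * c)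
      = (\<Sum>b<Suc J. \<Sum>s<n. cnj (W b s) * z b s * c)"
    by (intro sum.cong refl) (auto simp: embed_at embed_N0 embed_N0')
  have e3: "(\<Sum>b<Suc J. \<Sum>s<n. cnj c * cnj (z b s) * embed n J W c (b*n+s))
      = (\<Sum>b<Suc J. \<Sum>s<n. cnj c * cnj (z b s) * W b s)"
    by (intro sum.cong refl) (auto simp: embed_at embed_N0 embed_N0')
  show ?thesis using lmi_QF[OF n, of J u t z "embed n J W c"] unfolding embed_N0 e1 e2 e3 by simp
qed

lemma QF_zero: "QF n M (\<lambda>_. 0) = 0" unfolding QF_def by simp

lemma block_facts:
  fixes u z :: "nat \<Rightarrow> nat \<Rightarrow> complex" and n J :: nat
  assumes n: "n \<ge> 1" and P: "psd ((J + 1) * n + 1) (lmi_matrix n J u t z)"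
  shows "t \<ge> 0" and "\<And>b. b < Suc J \<Longrightarrow> PSDn n (toep (u b))"
    and "\<And>b. b < Suc J \<Longrightarrow> Im (u b 0) = 0"
proof -
  have P': "\<And>v. QF ((J + 1) * n + 1) (lmi_matrix n J u t z) v \<in> \<real> \<and> 0 \<le> Re (QF ((J + 1) * n + 1) (lmi_matrix n J u t z) v)"
    using P unfolding psd_QF by blast
  have blk: "QF ((J+1)*n+1) (lmi_matrix n J u t z) (embed n J (\<lambda>b' s. if b' = b then w s else 0) 0) = QF n (toep (u b)) w"
    if b: "b < Suc J" for b w
  proof -
    have "(\<Sum>b'<Suc J. QF n (toep (u b')) (\<lambda>s. if b' = b then w s else 0)) = (\<Sum>b'<Suc J. if b' = b then QF n (toep (u b)) w else 0)"
      by (intro sum.cong refl) (auto simp: QF_zero)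
    also have "\<dots> = QF n (toep (u b)) w" using b by (simp add: sum.delta')
    finally show ?thesis unfolding lmi_QF_embed[OF n] by simp
  qed
  have "QF ((J+1)*n+1) (lmi_matrix n J u t z) (embed n J (\<lambda>_ _. 0) 1) = complex_of_real t"
    unfolding lmi_QF_embed[OF n] by (simp add: QF_zero)
  thus "t \<ge> 0" using P'[of "embed n J (\<lambda>_ _. 0) 1"] by simp
  show "PSDn n (toep (u b))" if b: "b < Suc J" for b
    unfolding PSDn_def using P' blk[OF b] by metis
  show "Im (u b 0) = 0" if b: "b < Suc J" for b
  proof -
    have "QF n (toep (u b)) (\<lambda>i. if i = 0 then 1 else 0) = u b 0"
      using QF_e0[OF n] by (simp add: toep_def)
    thus ?thesis using P'[of "embed n J (\<lambda>b' s. if b' = b then (if s = 0 then 1 else 0) else 0) 0"] blk[OF b]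
      by (metis complex_is_Real_iff)
  qed
qed



lemma dirB:
  fixes u z :: "nat \<Rightarrow> nat \<Rightarrow> complex" and n J :: nat and x :: "nat \<Rightarrow> nat \<Rightarrow> complex"
  assumes n: "n \<ge> 1"
    and feas: "\<forall>j\<in>{1..J}. \<forall>s<n. z 0 s + z j s = x j s"
    and P: "psd ((J + 1) * n + 1) (lmi_matrix n J u t z)"
    and bdd: "bdd_below Sca"
    and Sca: "Sca = {atomic_norm n zc + (\<Sum>j=1..J. atomic_norm n (zz j)) | zc zz. \<forall>j\<in>{1..J}. \<forall>t<n. zc t + zz j t = x j t}"
  shows "Inf Sca \<le> (\<Sum>b<Suc J. Re (u b 0)) / 2 + t / 2"
proof (rule field_le_epsilon)
  fix e :: real assume e: "e > 0"
  define \<epsilon> where "\<epsilon> = e / real (Suc J)"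
  have eps: "\<epsilon> > 0" using e by (simp add: \<epsilon>_def)
  have blk: "\<exists>w S. atomic_norm n (z b) \<le> (Re (u b 0) + \<epsilon>) / 2 + S / 2 \<and> Re (QF n (toep (u b)) w) \<le> S
      \<and> (\<Sum>r<n. cnj (w r) * z b r) = complex_of_real S" if b: "b < Suc J" for b
  proof -
    obtain N E where NE: "N > 0" "n \<le> N" "\<forall>k<N. 0 < E k" "(\<Sum>k<N. E k) \<le> Re (u b 0) + \<epsilon>"
      "\<forall>v. Re (QF n (toep (u b)) v) \<le> (\<Sum>k<N. E k * (cmod (beta n N v k))\<^sup>2)"
      using carath[OF n block_facts(3)[OF n P b] block_facts(2)[OF n P b] eps] by blast
    obtain w where w: "\<forall>r<n. gmap n N E w r = z b r" using grid_solve[OF NE(1,2,3)] by blast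
    define S where "S = (\<Sum>k<N. E k * (cmod (beta n N w k))\<^sup>2)"
    have an: "atomic_norm n (z b) \<le> (\<Sum>k<N. E k) / 2 + S / 2"
    proof -
      have E0: "\<forall>k<N. 0 \<le> E k" using NE(3) by (simp add: less_imp_le)
      have zg: "\<forall>r<n. z b r = gmap n N E w r" using w by simp
      show ?thesis unfolding S_def by (rule an_grid[OF NE(1) E0 zg])
    qed
    have gg: "(\<Sum>r<n. cnj (w r) * z b r) = complex_of_real S"
    proof -
      have "(\<Sum>r<n. cnj (w r) * z b r) = (\<Sum>r<n. cnj (w r) * gmap n N E w r)" using w by simp
      also have "\<dots> = (\<Sum>k<N. complex_of_real (E k) * (beta n N w k * cnj (beta n N w k)))" by (rule grid_gram)
      also have "\<dots> = complex_of_real S" unfolding S_def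
        by (simp only: of_real_sum of_real_mult complex_norm_square)
      finally show ?thesis .
    qed
    have q: "Re (QF n (toep (u b)) w) \<le> S" using NE(5) unfolding S_def by blast
    have a2: "atomic_norm n (z b) \<le> (Re (u b 0) + \<epsilon>) / 2 + S / 2" using an divide_right_mono[OF NE(4), of 2] by linarith
    show ?thesis using a2 q gg by blast
  qed
  hence "\<forall>b. \<exists>p. b < Suc J \<longrightarrow> (atomic_norm n (z b) \<le> (Re (u b 0) + \<epsilon>) / 2 + snd p / 2 \<and> Re (QF n (toep (u b)) (fst p)) \<le> snd p
      \<and> (\<Sum>r<n. cnj (fst p r) * z b r) = complex_of_real (snd p))" by force
  then obtain F where F: "\<forall>b. b < Suc J \<longrightarrow> (atomic_norm n (z b) \<le> (Re (u b 0) + \<epsilon>) / 2 + snd (F b) / 2 \<and> Re (QF n (toep (u b)) (fst (F b))) \<le> snd (F b)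
      \<and> (\<Sum>r<n. cnj (fst (F b) r) * z b r) = complex_of_real (snd (F b)))" by (rule choice[THEN exE]) blast
  define W where "W = (\<lambda>b. fst (F b))"
  define SS where "SS = (\<lambda>b. snd (F b))"
  have WS: "\<And>b. b < Suc J \<Longrightarrow> atomic_norm n (z b) \<le> (Re (u b 0) + \<epsilon>) / 2 + SS b / 2"
     "\<And>b. b < Suc J \<Longrightarrow> Re (QF n (toep (u b)) (W b)) \<le> SS b"
     "\<And>b. b < Suc J \<Longrightarrow> (\<Sum>r<n. cnj (W b r) * z b r) = complex_of_real (SS b)"
    using F unfolding W_def SS_def by auto
  have P': "0 \<le> Re (QF ((J + 1) * n + 1) (lmi_matrix n J u t z) (embed n J W (-1)))"
    using P unfolding psd_QF by blast
  have X2: "(\<Sum>b<Suc J. \<Sum>s<n. cnj (W b s) * z b s * (-1)) = - complex_of_real (\<Sum>b<Suc J. SS b)"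
  proof -
    have "(\<Sum>b<Suc J. \<Sum>s<n. cnj (W b s) * z b s * (-1)) = (\<Sum>b<Suc J. - complex_of_real (SS b))"
      by (intro sum.cong refl) (simp add: sum_negf WS(3)[symmetric])
    thus ?thesis by (simp add: sum_negf)
  qed
  have X3: "(\<Sum>b<Suc J. \<Sum>s<n. cnj (-1) * cnj (z b s) * W b s) = - complex_of_real (\<Sum>b<Suc J. SS b)"
  proof -
    have "(\<Sum>b<Suc J. \<Sum>s<n. cnj (-1) * cnj (z b s) * W b s) = (\<Sum>b<Suc J. - cnj (complex_of_real (SS b)))"
    proof (intro sum.cong refl)
      fix b assume "b \<in> {..<Suc J}"
      hence "cnj (\<Sum>r<n. cnj (W b r) * z b r) = cnj (complex_of_real (SS b))" using WS(3) by simp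
      thus "(\<Sum>s<n. cnj (-1) * cnj (z b s) * W b s) = - cnj (complex_of_real (SS b))"
        by (simp add: cnj_sum sum_negf mult.commute)
    qed
    thus ?thesis by (simp add: sum_negf)
  qed
  have "0 \<le> (\<Sum>b<Suc J. Re (QF n (toep (u b)) (W b))) - 2 * (\<Sum>b<Suc J. SS b) + t"
    using P' unfolding lmi_QF_embed[OF n] X2 X3 by (simp add: Re_sum)
  moreover have "(\<Sum>b<Suc J. Re (QF n (toep (u b)) (W b))) \<le> (\<Sum>b<Suc J. SS b)"
    using WS(2) by (intro sum_mono) auto
  ultimately have SSt: "(\<Sum>b<Suc J. SS b) \<le> t" by simp
  have mem: "(\<Sum>b<Suc J. atomic_norm n (z b)) \<in> Sca"
    unfolding Sca using feas sum_0J[of "\<lambda>b. atomic_norm n (z b)" J, symmetric] by blast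
  have "Inf Sca \<le> (\<Sum>b<Suc J. atomic_norm n (z b))" by (rule cInf_lower[OF mem bdd])
  also have "\<dots> \<le> (\<Sum>b<Suc J. (Re (u b 0) + \<epsilon>) / 2 + SS b / 2)"
    using WS(1) by (intro sum_mono) auto
  also have "\<dots> = (\<Sum>b<Suc J. Re (u b 0)) / 2 + real (Suc J) * \<epsilon> / 2 + (\<Sum>b<Suc J. SS b) / 2"
    by (simp add: sum.distrib sum_divide_distrib[symmetric] add_divide_distrib)
  also have "real (Suc J) * \<epsilon> = e" using \<epsilon>_def by simp
  finally have "Inf Sca \<le> (\<Sum>b<Suc J. Re (u b 0)) / 2 + e / 2 + (\<Sum>b<Suc J. SS b) / 2" .
  thus "Inf Sca \<le> (\<Sum>b<Suc J. Re (u b 0)) / 2 + t / 2 + e" using SSt e by linarith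
qed



lemma dirA_point:
  fixes Z :: "nat \<Rightarrow> nat \<Rightarrow> complex" and n J :: nat
  assumes n: "n \<ge> 1" and e: "e > 0"
  shows "\<exists>u tt. psd ((J+1)*n+1) (lmi_matrix n J u tt Z) \<and>
     (\<Sum>b<Suc J. Re (u b 0)) / 2 + tt / 2 \<le> (\<Sum>b<Suc J. atomic_norm n (Z b)) + e"
proof -
  define \<epsilon> where "\<epsilon> = e / real (Suc J)"
  have eps: "\<epsilon> > 0" using e by (simp add: \<epsilon>_def)
  have "\<forall>b. \<exists>p::nat \<times> (nat\<Rightarrow>real) \<times> (nat\<Rightarrow>real) \<times> (nat\<Rightarrow>real). (\<forall>k<fst p. 0 \<le> fst (snd p) k \<and> fst (snd (snd p)) k \<in> {0..1}) \<and>
      (\<forall>t<n. Z b t = (\<Sum>k<fst p. complex_of_real (fst (snd p) k) * atom (fst (snd (snd p)) k) (snd (snd (snd p)) k) t)) \<and>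
      (\<Sum>k<fst p. fst (snd p) k) < atomic_norm n (Z b) + \<epsilon>"
  proof
    fix b
    obtain m :: nat and \<rho> f \<phi> where "(\<forall>k<m. 0 \<le> \<rho> k \<and> f k \<in> {0..1}) \<and>
      (\<forall>t<n. Z b t = (\<Sum>k<m. complex_of_real (\<rho> k) * atom (f k) (\<phi> k) t)) \<and>
      (\<Sum>k<m. \<rho> k) < atomic_norm n (Z b) + \<epsilon>" using an_approx[OF n eps, of "Z b"] by blast
    note H = this
    show "\<exists>p::nat \<times> (nat\<Rightarrow>real) \<times> (nat\<Rightarrow>real) \<times> (nat\<Rightarrow>real). (\<forall>k<fst p. 0 \<le> fst (snd p) k \<and> fst (snd (snd p)) k \<in> {0..1}) \<and>
      (\<forall>t<n. Z b t = (\<Sum>k<fst p. complex_of_real (fst (snd p) k) * atom (fst (snd (snd p)) k) (snd (snd (snd p)) k) t)) \<and>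
      (\<Sum>k<fst p. fst (snd p) k) < atomic_norm n (Z b) + \<epsilon>"
      apply (rule exI[where x="(m, \<rho>, f, \<phi>)"]) using H by simp
  qed
  then obtain F :: "nat \<Rightarrow> nat \<times> (nat\<Rightarrow>real) \<times> (nat\<Rightarrow>real) \<times> (nat\<Rightarrow>real)" where F: "\<forall>b. (\<forall>k<fst (F b). 0 \<le> fst (snd (F b)) k \<and> fst (snd (snd (F b))) k \<in> {0..1}) \<and>
      (\<forall>t<n. Z b t = (\<Sum>k<fst (F b). complex_of_real (fst (snd (F b)) k) * atom (fst (snd (snd (F b))) k) (snd (snd (snd (F b))) k) t)) \<and>
      (\<Sum>k<fst (F b). fst (snd (F b)) k) < atomic_norm n (Z b) + \<epsilon>"
    by (rule choice[THEN exE]) blast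
  define m where "m = (\<lambda>b. fst (F b))"
  define \<rho> where "\<rho> = (\<lambda>b. fst (snd (F b)))"
  define f where "f = (\<lambda>b. fst (snd (snd (F b))))"
  define \<phi> where "\<phi> = (\<lambda>b. snd (snd (snd (F b))))"
  have F1: "\<And>b k. k < m b \<Longrightarrow> 0 \<le> \<rho> b k" using F unfolding m_def \<rho>_def by blast
  have F2: "\<forall>b<Suc J. \<forall>t<n. Z b t = (\<Sum>k<m b. complex_of_real (\<rho> b k) * atom (f b k) (\<phi> b k) t)"
    using F unfolding m_def \<rho>_def f_def \<phi>_def by blast
  have F3: "\<And>b. (\<Sum>k<m b. \<rho> b k) < atomic_norm n (Z b) + \<epsilon>" using F unfolding m_def \<rho>_def by blast
  define u where "u = (\<lambda>b d. \<Sum>k<m b. complex_of_real (\<rho> b k) * ex (f b k * real d))"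
  define tt where "tt = (\<Sum>b<Suc J. \<Sum>k<m b. \<rho> b k)"
  have Q: "\<forall>v. QF ((J+1)*n+1) (lmi_matrix n J u tt Z) v = complex_of_real
      (\<Sum>b<Suc J. \<Sum>k<m b. \<rho> b k * (cmod (cis (\<phi> b k) * (\<Sum>s<n. cnj (v (b*n+s)) * ex (f b k * real s)) + cnj (v ((J+1)*n))))\<^sup>2)"
    unfolding u_def tt_def by (rule construct[OF n F2])
  have psd: "psd ((J+1)*n+1) (lmi_matrix n J u tt Z)"
    unfolding psd_QF
  proof
    fix v
    show "QF ((J+1)*n+1) (lmi_matrix n J u tt Z) v \<in> \<real> \<and> 0 \<le> Re (QF ((J+1)*n+1) (lmi_matrix n J u tt Z) v)"
    proof -
      have nn: "0 \<le> (\<Sum>b<Suc J. \<Sum>k<m b. \<rho> b k * (cmod (cis (\<phi> b k) * (\<Sum>s<n. cnj (v (b*n+s)) * ex (f b k * real s)) + cnj (v ((J+1)*n))))\<^sup>2)"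
      proof (intro sum_nonneg mult_nonneg_nonneg)
        fix b k assume "b \<in> {..<Suc J}" "k \<in> {..<m b}"
        thus "0 \<le> \<rho> b k" using F1 by simp
      qed simp
      show ?thesis unfolding Q[rule_format] using nn by (simp only: Reals_of_real Re_complex_of_real)
    qed
  qed
  have u0: "Re (u b 0) = (\<Sum>k<m b. \<rho> b k)" for b unfolding u_def by (simp add: Re_sum)
  have "(\<Sum>b<Suc J. Re (u b 0)) / 2 + tt / 2 = tt" unfolding u0 tt_def by simp
  also have "\<dots> \<le> (\<Sum>b<Suc J. atomic_norm n (Z b) + \<epsilon>)" unfolding tt_def
    using F3 by (intro sum_mono) (simp add: less_imp_le)
  also have "\<dots> = (\<Sum>b<Suc J. atomic_norm n (Z b)) + e" using \<epsilon>_def by (simp add: sum.distrib)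
  finally show ?thesis using psd by blast
qed

theorem theorem1:
  fixes n J :: nat and x :: "nat \<Rightarrow> nat \<Rightarrow> complex"
  assumes "n \<ge> 1" and "J \<ge> 1"
  shows "ca_norm n J x =
    Inf {Re (mtrace n (toep (u 0)) + (\<Sum>j=1..J. mtrace n (toep (u j)))) / (2 * real n) + t / 2
          | u t z. (\<forall>j\<in>{1..J}. \<forall>s<n. z 0 s + z j s = x j s) \<and>
                   psd ((J + 1) * n + 1) (lmi_matrix n J u t z)}"
proof -
  have n: "n \<ge> 1" by fact
  define Sca where "Sca = {atomic_norm n zc + (\<Sum>j=1..J. atomic_norm n (zz j)) | zc zz. \<forall>j\<in>{1..J}. \<forall>t<n. zc t + zz j t = x j t}"
  define Ssdp where "Ssdp = {Re (mtrace n (toep (u 0)) + (\<Sum>j=1..J. mtrace n (toep (u j)))) / (2 * real n) + t / 2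
          | u t z. (\<forall>j\<in>{1..J}. \<forall>s<n. z 0 s + z j s = x j s) \<and>
                   psd ((J + 1) * n + 1) (lmi_matrix n J u t z)}"
  have ca: "ca_norm n J x = Inf Sca" unfolding ca_norm_def Sca_def by (rule refl)
  have Sca_ne: "Sca \<noteq> {}"
  proof -
    have "atomic_norm n (\<lambda>_. 0) + (\<Sum>j=1..J. atomic_norm n (x j)) \<in> Sca" unfolding Sca_def by force
    thus ?thesis by blast
  qed
  have Sca_bdd: "bdd_below Sca"
    unfolding Sca_def by (rule bdd_belowI[of _ 0]) (auto intro!: add_nonneg_nonneg sum_nonneg an_nonneg[OF n])
  have mem: "(\<Sum>b<Suc J. Re (u b 0)) / 2 + t / 2 \<in> Ssdp"
    if "\<forall>j\<in>{1..J}. \<forall>s<n. z 0 s + z j s = x j s" "psd ((J + 1) * n + 1) (lmi_matrix n J u t z)" for u t z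
    using that unfolding Ssdp_def obj_eq[OF n, symmetric] by blast
  have Ssdp_el: "\<exists>u t z. s = (\<Sum>b<Suc J. Re (u b 0)) / 2 + t / 2 \<and> (\<forall>j\<in>{1..J}. \<forall>s<n. z 0 s + z j s = x j s) \<and>
                   psd ((J + 1) * n + 1) (lmi_matrix n J u t z)" if "s \<in> Ssdp" for s
    using that unfolding Ssdp_def obj_eq[OF n] by blast
  have Ssdp_bdd: "bdd_below Ssdp"
  proof (rule bdd_belowI[of _ 0])
    fix s assume "s \<in> Ssdp"
    then obtain u t z where s: "s = (\<Sum>b<Suc J. Re (u b 0)) / 2 + t / 2"
      and P: "psd ((J + 1) * n + 1) (lmi_matrix n J u t z)" using Ssdp_el by blast
    have "t \<ge> 0" by (rule block_facts(1)[OF n P])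
    moreover have "(\<Sum>b<Suc J. Re (u b 0)) \<ge> 0"
      by (intro sum_nonneg) (simp add: toep_u0_real[OF block_facts(2)[OF n P] n])
    ultimately show "0 \<le> s" unfolding s by simp
  qed
  have Ssdp_ne: "Ssdp \<noteq> {}"
  proof -
    obtain u tt where P: "psd ((J+1)*n+1) (lmi_matrix n J u tt (\<lambda>b. if b = 0 then (\<lambda>_. 0) else x b))"
      using dirA_point[OF n, of 1 J "\<lambda>b. if b = 0 then (\<lambda>_. 0) else x b"] by auto
    have "(\<Sum>b<Suc J. Re (u b 0)) / 2 + tt / 2 \<in> Ssdp" by (rule mem) (use P in auto)
    thus ?thesis by blast
  qed
  have le1: "Inf Sca \<le> Inf Ssdp"
  proof (rule cInf_greatest[OF Ssdp_ne])
    fix s assume "s \<in> Ssdp"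
    then obtain u t z where s: "s = (\<Sum>b<Suc J. Re (u b 0)) / 2 + t / 2"
      and feas: "\<forall>j\<in>{1..J}. \<forall>s<n. z 0 s + z j s = x j s"
      and P: "psd ((J + 1) * n + 1) (lmi_matrix n J u t z)" using Ssdp_el by blast
    show "Inf Sca \<le> s" unfolding s by (rule dirB[OF n feas P Sca_bdd Sca_def])
  qed
  have le2: "Inf Ssdp \<le> Inf Sca"
  proof (rule cInf_greatest[OF Sca_ne])
    fix y assume "y \<in> Sca"
    then obtain zc zz where y: "y = atomic_norm n zc + (\<Sum>j=1..J. atomic_norm n (zz j))"
      and feas: "\<forall>j\<in>{1..J}. \<forall>t<n. zc t + zz j t = x j t" unfolding Sca_def by blast
    define Z where "Z = (\<lambda>b. if b = 0 then zc else zz b)"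
    have y': "y = (\<Sum>b<Suc J. atomic_norm n (Z b))"
    proof -
      have "(\<Sum>j=1..J. atomic_norm n (zz j)) = (\<Sum>j=1..J. atomic_norm n (Z j))"
        by (intro sum.cong refl) (auto simp: Z_def)
      moreover have "atomic_norm n zc = atomic_norm n (Z 0)" by (simp add: Z_def)
      ultimately show ?thesis unfolding y sum_0J[of "\<lambda>b. atomic_norm n (Z b)", symmetric] by simp
    qed
    show "Inf Ssdp \<le> y"
    proof (rule field_le_epsilon)
      fix e :: real assume e: "e > 0"
      obtain u tt where P: "psd ((J+1)*n+1) (lmi_matrix n J u tt Z)"
        and ob: "(\<Sum>b<Suc J. Re (u b 0)) / 2 + tt / 2 \<le> (\<Sum>b<Suc J. atomic_norm n (Z b)) + e"
        using dirA_point[OF n e, of J Z] by blast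
      have feasZ: "\<forall>j\<in>{1..J}. \<forall>s<n. Z 0 s + Z j s = x j s" using feas unfolding Z_def by auto
      have "Inf Ssdp \<le> (\<Sum>b<Suc J. Re (u b 0)) / 2 + tt / 2"
        by (rule cInf_lower[OF mem[OF feasZ P] Ssdp_bdd])
      thus "Inf Ssdp \<le> y + e" using ob y' by simp
    qed
  qed
  show ?thesis unfolding ca Ssdp_def[symmetric] using le1 le2 by simp
qed


end
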